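(* Let $\{(\Gamma_t,\theta_t)\}_{t\in[0,\underline t)}$ be a solution of the framed curvature flow with $\theta$-velocity $\upsilon_\theta$, and let $\Sigma$ be its trajectory surface, parametrized by $(u,t)\mapsto\gamma(t,u)$. At points where $\kappa>0$, the mean curvature $H$ and the Gaussian curvature $K$ of $\Sigma$ are $$H=-\psi_2+\chi,\qquad K=-\psi_3^2-\psi_2\chi,$$ where $$\chi:=\frac{\upsilon_\theta}{\kappa}+\frac{\kappa\,\partial_s\psi_3+2\,\partial_s\kappa\,\psi_3}{\kappa^3}\,\psi_1+\frac{\partial_s^2\kappa-\kappa\,\psi_3^2}{\kappa^3}\,\psi_2 .$$
   Context: Let $S^1=\mathbb{R}/2\pi\mathbb{Z}$. A family of closed curves $\Gamma_t\subset\mathbb{R}^3$, $t\in[0,\underline t)$, is given by sufficiently smooth parametrizations $\gamma(t,\cdot):S^1\to\mathbb{R}^3$; $g:=\|\partial_u\gamma\|$, $ds=g\,du$, $\partial_s=g^{-1}\partial_u$. $T,N,B$ denote the Frenet frame, $\kappa$ the curvature and $\tau$ the torsion of $\Gamma_t$. For an angle function $\theta\in\mathcal C^{1,2}([0,\underline t)\times S^1;S^1)$, $\theta_t:=\theta(t,\cdot)$, define the $\theta$-normal $\nu_\theta=\cos\theta\,N+\sin\theta\,B$, the $\theta$-binormal $\beta_\theta=-\sin\theta\,N+\cos\theta\,B=T\times\nu_\theta$, and $\psi_1=\kappa\cos\theta$, $\psi_2=\kappa\sin\theta$, $\psi_3=\tau+\partial_s\theta$. The family solves the framed curvature flow with $\theta$-velocity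 $\upsilon_\theta\in\mathcal C^1([0,\underline t)\times S^1;\mathbb{R})$ if $\partial_t\gamma=\kappa\nu_\theta$ and $\partial_t\theta=\upsilon_\theta$ on $[0,\underline t)\times S^1$ (with given initial data). The trajectory surface is $\Sigma=\bigcup_{t\in[0,\underline t)}\Gamma_t$, parametrized by $\gamma(t,u)$. Its first and second fundamental forms are taken in the coordinates $(u,t)$ with respect to the unit normal $\beta_\theta$; $K=\det\mathrm{I\!I}/\det\mathrm{I}$ and the mean curvature is $H=\mathrm{tr}(\mathrm{I\!I}\,\mathrm{I}^{-1})$ (the sum of the principal curvatures). *)

theory Defs
  imports "HOL-Analysis.Analysis"
begin

text \<open>D is the time interval [0, tb). Time derivatives are taken within D
  (one-sided at t = 0), space derivatives are ordinary derivatives in u.\<close>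

definition time_dom :: "ereal \<Rightarrow> real set" where
  "time_dom tb = {t. 0 \<le> t \<and> ereal t < tb}"

definition Du :: "(real \<times> real \<Rightarrow> 'a::real_normed_vector) \<Rightarrow> real \<times> real \<Rightarrow> 'a" where
  "Du f p = vector_derivative (\<lambda>v. f (fst p, v)) (at (snd p))"

definition Dt :: "real set \<Rightarrow> (real \<times> real \<Rightarrow> 'a::real_normed_vector) \<Rightarrow> real \<times> real \<Rightarrow> 'a" where
  "Dt D f p = vector_derivative (\<lambda>s. f (s, snd p)) (at (fst p) within D)"

fun pderivs :: "bool list \<Rightarrow> real set \<Rightarrow> (real \<times> real \<Rightarrow> 'a::real_normed_vector) \<Rightarrow> real \<times> real \<Rightarrow> 'a" where
  "pderivs [] D f = f"
| "pderivs (b # bs) D f = (if b then Dt D (pderivs bs D f) else Du (pderivs bs D f))"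

definition smooth_strip :: "real set \<Rightarrow> (real \<times> real \<Rightarrow> 'a::real_normed_vector) \<Rightarrow> bool" where
  "smooth_strip D f \<longleftrightarrow>
     (\<forall>bs. continuous_on (D \<times> UNIV) (pderivs bs D f) \<and>
        (\<forall>t\<in>D. \<forall>u. (\<lambda>s. pderivs bs D f (s, u)) differentiable (at t within D) \<and>
                    (\<lambda>v. pderivs bs D f (t, v)) differentiable (at u)))"

definition C12_strip :: "real set \<Rightarrow> (real \<times> real \<Rightarrow> real) \<Rightarrow> bool" where
  "C12_strip D f \<longleftrightarrow>
     continuous_on (D \<times> UNIV) f \<and> continuous_on (D \<times> UNIV) (Dt D f) \<and>
     continuous_on (D \<times> UNIV) (Du f) \<and> continuous_on (D \<times> UNIV) (Du (Du f)) \<and>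
     (\<forall>t\<in>D. \<forall>u. (\<lambda>s. f (s, u)) differentiable (at t within D) \<and>
                 (\<lambda>v. f (t, v)) differentiable (at u) \<and>
                 (\<lambda>v. Du f (t, v)) differentiable (at u))"

definition C1_strip :: "real set \<Rightarrow> (real \<times> real \<Rightarrow> real) \<Rightarrow> bool" where
  "C1_strip D f \<longleftrightarrow>
     continuous_on (D \<times> UNIV) f \<and> continuous_on (D \<times> UNIV) (Dt D f) \<and>
     continuous_on (D \<times> UNIV) (Du f) \<and>
     (\<forall>t\<in>D. \<forall>u. (\<lambda>s. f (s, u)) differentiable (at t within D) \<and>
                 (\<lambda>v. f (t, v)) differentiable (at u))"

definition speed :: "(real \<times> real \<Rightarrow> real^3) \<Rightarrow> real \<times> real \<Rightarrow> real" where
  "speed \<gamma> p = norm (Du \<gamma> p)"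

definition Ds :: "(real \<times> real \<Rightarrow> real^3) \<Rightarrow> (real \<times> real \<Rightarrow> 'a::real_normed_vector) \<Rightarrow> real \<times> real \<Rightarrow> 'a" where
  "Ds \<gamma> f p = (1 / speed \<gamma> p) *\<^sub>R Du f p"

definition tangent :: "(real \<times> real \<Rightarrow> real^3) \<Rightarrow> real \<times> real \<Rightarrow> real^3" where
  "tangent \<gamma> = Ds \<gamma> \<gamma>"

definition curvature :: "(real \<times> real \<Rightarrow> real^3) \<Rightarrow> real \<times> real \<Rightarrow> real" where
  "curvature \<gamma> p = norm (Ds \<gamma> (tangent \<gamma>) p)"

text \<open>Principal normal (set to 0 where the curvature vanishes; only used where kappa > 0
  or multiplied by kappa).\<close>
definition pnormal :: "(real \<times> real \<Rightarrow> real^3) \<Rightarrow> real \<times> real \<Rightarrow> real^3" where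
  "pnormal \<gamma> p = (1 / curvature \<gamma> p) *\<^sub>R Ds \<gamma> (tangent \<gamma>) p"

definition binormal :: "(real \<times> real \<Rightarrow> real^3) \<Rightarrow> real \<times> real \<Rightarrow> real^3" where
  "binormal \<gamma> p = cross3 (tangent \<gamma> p) (pnormal \<gamma> p)"

definition torsion :: "(real \<times> real \<Rightarrow> real^3) \<Rightarrow> real \<times> real \<Rightarrow> real" where
  "torsion \<gamma> p = Ds \<gamma> (pnormal \<gamma>) p \<bullet> binormal \<gamma> p"

definition theta_normal :: "(real \<times> real \<Rightarrow> real^3) \<Rightarrow> (real \<times> real \<Rightarrow> real) \<Rightarrow> real \<times> real \<Rightarrow> real^3" where
  "theta_normal \<gamma> \<theta> p = cos (\<theta> p) *\<^sub>R pnormal \<gamma> p + sin (\<theta> p) *\<^sub>R binormal \<gamma> p"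

definition theta_binormal :: "(real \<times> real \<Rightarrow> real^3) \<Rightarrow> (real \<times> real \<Rightarrow> real) \<Rightarrow> real \<times> real \<Rightarrow> real^3" where
  "theta_binormal \<gamma> \<theta> p = - sin (\<theta> p) *\<^sub>R pnormal \<gamma> p + cos (\<theta> p) *\<^sub>R binormal \<gamma> p"

definition psi1 :: "(real \<times> real \<Rightarrow> real^3) \<Rightarrow> (real \<times> real \<Rightarrow> real) \<Rightarrow> real \<times> real \<Rightarrow> real" where
  "psi1 \<gamma> \<theta> p = curvature \<gamma> p * cos (\<theta> p)"

definition psi2 :: "(real \<times> real \<Rightarrow> real^3) \<Rightarrow> (real \<times> real \<Rightarrow> real) \<Rightarrow> real \<times> real \<Rightarrow> real" where
  "psi2 \<gamma> \<theta> p = curvature \<gamma> p * sin (\<theta> p)"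

definition psi3 :: "(real \<times> real \<Rightarrow> real^3) \<Rightarrow> (real \<times> real \<Rightarrow> real) \<Rightarrow> real \<times> real \<Rightarrow> real" where
  "psi3 \<gamma> \<theta> p = torsion \<gamma> p + Ds \<gamma> \<theta> p"

definition framed_curvature_flow ::
  "ereal \<Rightarrow> (real \<times> real \<Rightarrow> real^3) \<Rightarrow> (real \<times> real \<Rightarrow> real) \<Rightarrow> (real \<times> real \<Rightarrow> real) \<Rightarrow> bool" where
  "framed_curvature_flow tb \<gamma> \<theta> \<upsilon> \<longleftrightarrow>
     (\<forall>t\<in>time_dom tb. \<forall>u.
        Dt (time_dom tb) \<gamma> (t, u) = curvature \<gamma> (t, u) *\<^sub>R theta_normal \<gamma> \<theta> (t, u) \<and>
        Dt (time_dom tb) \<theta> (t, u) = \<upsilon> (t, u))"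

definition fund1 :: "real set \<Rightarrow> (real \<times> real \<Rightarrow> real^3) \<Rightarrow> real \<times> real \<Rightarrow> real^2^2" where
  "fund1 D \<gamma> p =
     (let Xu = Du \<gamma> p; Xt = Dt D \<gamma> p in
      vector [vector [Xu \<bullet> Xu, Xu \<bullet> Xt], vector [Xt \<bullet> Xu, Xt \<bullet> Xt]])"

definition fund2 :: "real set \<Rightarrow> (real \<times> real \<Rightarrow> real^3) \<Rightarrow> (real \<times> real \<Rightarrow> real) \<Rightarrow> real \<times> real \<Rightarrow> real^2^2" where
  "fund2 D \<gamma> \<theta> p =
     (let n = theta_binormal \<gamma> \<theta> p in
      vector [vector [Du (Du \<gamma>) p \<bullet> n, Dt D (Du \<gamma>) p \<bullet> n],
              vector [Du (Dt D \<gamma>) p \<bullet> n, Dt D (Dt D \<gamma>) p \<bullet> n]])"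

definition gauss_curv :: "real set \<Rightarrow> (real \<times> real \<Rightarrow> real^3) \<Rightarrow> (real \<times> real \<Rightarrow> real) \<Rightarrow> real \<times> real \<Rightarrow> real" where
  "gauss_curv D \<gamma> \<theta> p = det (fund2 D \<gamma> \<theta> p) / det (fund1 D \<gamma> p)"

definition mean_curv :: "real set \<Rightarrow> (real \<times> real \<Rightarrow> real^3) \<Rightarrow> (real \<times> real \<Rightarrow> real) \<Rightarrow> real \<times> real \<Rightarrow> real" where
  "mean_curv D \<gamma> \<theta> p = trace (fund2 D \<gamma> \<theta> p ** matrix_inv (fund1 D \<gamma> p))"

end

theory Submission
  imports Defs
begin

lemma matrix_inv_eqI:
  fixes A B :: "real^'n^'n"
  assumes "A ** B = mat 1" "B ** A = mat 1"
  shows "matrix_inv A = B"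
proof -
  have ex: "\<exists>A'. A ** A' = mat 1 \<and> A' ** A = mat 1" using assms by blast
  define C where "C = matrix_inv A"
  have C: "A ** C = mat 1 \<and> C ** A = mat 1"
    unfolding C_def matrix_inv_def by (rule someI_ex[OF ex])
  have "C = C ** (A ** B)" using assms by (simp add: matrix_mul_rid)
  also have "\<dots> = (C ** A) ** B" by (simp add: matrix_mul_assoc)
  also have "\<dots> = B" using C by (simp add: matrix_mul_lid)
  finally show ?thesis unfolding C_def .
qed

lemma two_by_two:
  fixes a b c d p q :: real
  assumes "p \<noteq> 0" "q \<noteq> 0"
  shows "trace (vector [vector [a, b], vector [c, d]] ** matrix_inv (vector [vector [p, 0], vector [0, q]] :: real^2^2) :: real^2^2) = a / p + d / q"
    and "det (vector [vector [a, b], vector [c, d]] :: real^2^2) / det (vector [vector [p, 0], vector [0, q]] :: real^2^2) = (a*d - b*c) / (p*q)"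
proof -
  have inv: "matrix_inv (vector [vector [p, 0], vector [0, q]] :: real^2^2) = vector [vector [1/p, 0], vector [0, 1/q]]"
    apply (rule matrix_inv_eqI)
    using assms by (auto simp: matrix_matrix_mult_def mat_def vec_eq_iff forall_2 sum_2 vector_def)
  show "trace (vector [vector [a, b], vector [c, d]] ** matrix_inv (vector [vector [p, 0], vector [0, q]] :: real^2^2) :: real^2^2) = a / p + d / q"
    unfolding inv by (simp add: trace_def matrix_matrix_mult_def sum_2 vector_def UNIV_2)
  show "det (vector [vector [a, b], vector [c, d]] :: real^2^2) / det (vector [vector [p, 0], vector [0, q]] :: real^2^2) = (a*d - b*c) / (p*q)"
    by (simp add: det_2 vector_def)
qed

lemma D_nhd:
  assumes "t \<in> time_dom tb"
  obtains b where "t < b" "ereal b < tb" "{0..b} \<subseteq> time_dom tb"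
    "at t within time_dom tb = at t within {0..b}"
proof -
  from assms have t0: "0 \<le> t" and ttb: "ereal t < tb" by (auto simp: time_dom_def)
  obtain b where b1: "ereal t < ereal b" and b2: "ereal b < tb" using ereal_dense2[OF ttb] by auto
  have tb': "t < b" using b1 by simp
  have sub: "{0..b} \<subseteq> time_dom tb"
    using b2 by (auto simp: time_dom_def intro: le_less_trans[of _ "ereal b"])
  have eq: "at t within time_dom tb = at t within {0..b}"
  proof (rule at_within_nhd[of _ "{..<b}"])
    show "t \<in> {..<b}" using tb' by simp
    show "open {..<b}" by simp
    show "time_dom tb \<inter> {..<b} - {t} = {0..b} \<inter> {..<b} - {t}"
      using sub by (auto simp: time_dom_def)
  qed
  show ?thesis using that tb' b2 sub eq by blast
qed

lemma D_nbot:
  assumes "t \<in> time_dom tb"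
  shows "at t within time_dom tb \<noteq> bot"
proof -
  obtain b where "t < b" "at t within time_dom tb = at t within {0..b}"
    using D_nhd[OF assms] by metis
  moreover have "0 \<le> t" using assms by (simp add: time_dom_def)
  ultimately show ?thesis
    by (cases "t = 0") (auto simp: at_within_Icc_at_right at_within_Icc_at)
qed

lemma D_zero: "t \<in> time_dom tb \<Longrightarrow> 0 \<in> time_dom tb"
  by (auto simp: time_dom_def intro: le_less_trans[of _ "ereal t"])

lemma D_Icc: "t \<in> time_dom tb \<Longrightarrow> {0..t} \<subseteq> time_dom tb"
  by (auto simp: time_dom_def intro: le_less_trans[of _ "ereal t"])

lemma schwarz:
  fixes F :: "real \<times> real \<Rightarrow> 'a::banach"
  assumes D_def: "D = time_dom tb"
  assumes cont: "continuous_on (D \<times> UNIV) (Du (Dt D F))"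
    and dt: "\<And>s v. s \<in> D \<Longrightarrow> ((\<lambda>s. F (s, v)) has_vector_derivative Dt D F (s, v)) (at s within D)"
    and du: "\<And>s v. s \<in> D \<Longrightarrow> ((\<lambda>v. F (s, v)) has_vector_derivative Du F (s, v)) (at v)"
    and dudt: "\<And>s v. s \<in> D \<Longrightarrow> ((\<lambda>v. Dt D F (s, v)) has_vector_derivative Du (Dt D F) (s, v)) (at v)"
    and t: "t \<in> D"
  shows "Dt D (Du F) (t, u) = Du (Dt D F) (t, u)"
proof -
  define m where "m = Du (Dt D F)"
  have 0: "0 \<in> D" using t D_zero unfolding D_def by blast
  have rep: "Du F (s, u) = Du F (0, u) + integral {0..s} (\<lambda>r. m (r, u))" if s: "s \<in> D" for s
  proof -
    have sub: "{0..s} \<subseteq> D" using D_Icc s unfolding D_def by blast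
    have s0: "0 \<le> s" using s by (simp add: D_def time_dom_def)
    have ftc: "((\<lambda>r. Dt D F (r, v)) has_integral (F (s, v) - F (0, v))) {0..s}" for v
      apply (rule fundamental_theorem_of_calculus[OF s0])
      using dt sub by (meson has_vector_derivative_within_subset subsetD)
    have cm: "continuous_on (UNIV \<times> cbox 0 s) (\<lambda>(x, r). m (r, x))"
    proof -
      have "continuous_on (UNIV \<times> cbox 0 s) (m \<circ> (\<lambda>(x, r). (r, x)))"
        apply (rule continuous_on_compose)
        apply (auto intro!: continuous_intros simp: split_beta)[1]
        apply (rule continuous_on_subset[OF cont[folded m_def]])
        using sub by auto
      then show ?thesis by (simp add: o_def split_beta)
    qed
    have lr: "((\<lambda>x. integral (cbox 0 s) (\<lambda>r. Dt D F (r, x))) has_vector_derivative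
        integral (cbox 0 s) (\<lambda>r. m (r, x0))) (at x0 within UNIV)" for x0
      apply (rule leibniz_rule_vector_derivative[where fx = "\<lambda>x r. m (r, x)"])
      using dudt sub ftc cm unfolding m_def by (auto intro: has_integral_integrable[OF ftc])
    have eqf: "(\<lambda>v. F (s, v)) = (\<lambda>v. F (0, v) + integral {0..s} (\<lambda>r. Dt D F (r, v)))"
      proof
      fix v show "F (s, v) = F (0, v) + integral {0..s} (\<lambda>r. Dt D F (r, v))"
        using integral_unique[OF ftc[of v]] by simp
    qed
    have "((\<lambda>v. F (s, v)) has_vector_derivative Du F (0, u) + integral {0..s} (\<lambda>r. m (r, u))) (at u)"
      unfolding eqf using du[OF 0] lr[of u] by (auto intro!: derivative_intros)
    with du[OF s, of u] show ?thesis using vector_derivative_unique_at by blast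
  qed
  obtain b where b: "t < b" "{0..b} \<subseteq> D" "at t within D = at t within {0..b}"
    using D_nhd[of t tb] t unfolding D_def by metis
  have t0: "0 \<le> t" using t by (simp add: D_def time_dom_def)
  have cmu: "continuous_on {0..b} (\<lambda>r. m (r, u))"
    apply (rule continuous_on_compose2[OF cont[folded m_def]])
    using b by (auto intro!: continuous_intros)
  have "((\<lambda>s. Du F (0, u) + integral {0..s} (\<lambda>r. m (r, u))) has_vector_derivative m (t, u)) (at t within {0..b})"
    using integral_has_vector_derivative[OF cmu, of t] t0 b by (auto intro!: derivative_eq_intros)
  then have "((\<lambda>s. Du F (0, u) + integral {0..s} (\<lambda>r. m (r, u))) has_vector_derivative m (t, u)) (at t within D)"
    using b by simp
  then have "((\<lambda>s. Du F (s, u)) has_vector_derivative m (t, u)) (at t within D)"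
    apply (rule has_vector_derivative_transform_within[where d=1])
    using t rep by auto
  then show ?thesis unfolding Dt_def m_def
    using vector_derivative_within D_nbot t unfolding D_def by (simp add: D_nbot vector_derivative_within)
qed

definition D1 :: "(real \<Rightarrow> 'a::real_normed_vector) \<Rightarrow> real \<Rightarrow> 'a" where
  "D1 f v = vector_derivative f (at v)"

fun Cn :: "nat \<Rightarrow> real set \<Rightarrow> (real \<Rightarrow> 'a::real_normed_vector) \<Rightarrow> bool" where
  "Cn 0 S f = True"
| "Cn (Suc n) S f = ((\<forall>v\<in>S. f differentiable at v) \<and> Cn n S (D1 f))"

lemma D1_works: "f differentiable at v \<Longrightarrow> (f has_vector_derivative D1 f v) (at v)"
  unfolding D1_def using vector_derivative_works by blast

lemma D1_eq: "(f has_vector_derivative y) (at v) \<Longrightarrow> D1 f v = y"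
  unfolding D1_def by (rule vector_derivative_at)

lemma D1_eq_real: "(f has_real_derivative y) (at v) \<Longrightarrow> D1 f v = y"
  unfolding D1_def has_real_derivative_iff_has_vector_derivative by (rule vector_derivative_at)

lemma D1_works_real: "(f::real\<Rightarrow>real) differentiable at v \<Longrightarrow> (f has_real_derivative D1 f v) (at v)"
  unfolding has_real_derivative_iff_has_vector_derivative by (rule D1_works)

lemma Cn_diff: "Cn (Suc n) S f \<Longrightarrow> v \<in> S \<Longrightarrow> (f has_vector_derivative D1 f v) (at v)"
  by (auto intro: D1_works)

lemma Cn_diff_real: "Cn (Suc n) S (f::real\<Rightarrow>real) \<Longrightarrow> v \<in> S \<Longrightarrow> (f has_real_derivative D1 f v) (at v)"
  by (auto intro: D1_works_real)

lemma Cn_differentiable: "Cn (Suc n) S f \<Longrightarrow> v \<in> S \<Longrightarrow> f differentiable at v"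
  by auto

lemma Cn_mono: "Cn (Suc n) S f \<Longrightarrow> Cn n S f"
  by (induction n arbitrary: f) auto

lemma Cn_le0: "Cn (m + k) S f \<Longrightarrow> Cn m S f"
proof (induction k)
  case 0 then show ?case by simp
next
  case (Suc k) then show ?case using Cn_mono[of "m+k" S f] by simp
qed

lemma Cn_le: "m \<le> n \<Longrightarrow> Cn n S f \<Longrightarrow> Cn m S f"
  using Cn_le0[of m "n - m" S f] by simp

lemma Cn_le': "Cn n S f \<Longrightarrow> m \<le> n \<Longrightarrow> Cn m S f"
  using Cn_le by blast

lemma Cn_D1: "Cn (Suc n) S f \<Longrightarrow> Cn n S (D1 f)"
  by simp

lemma D1_cong:
  assumes "open S" "\<And>w. w \<in> S \<Longrightarrow> f w = g w" "v \<in> S"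
  shows "D1 f v = D1 g v"
proof -
  have "(f has_vector_derivative y) (at v) \<longleftrightarrow> (g has_vector_derivative y) (at v)" for y
    using assms has_vector_derivative_transform_within_open[of f y v S g]
      has_vector_derivative_transform_within_open[of g y v S f] by auto
  then show ?thesis unfolding D1_def vector_derivative_def by simp
qed

lemma Cn_cong:
  assumes "open S" "\<And>w. w \<in> S \<Longrightarrow> f w = g w" "Cn n S f"
  shows "Cn n S g"
  using assms(2,3)
proof (induction n arbitrary: f g)
  case 0 then show ?case by simp
next
  case (Suc n)
  have "g differentiable at v" if "v \<in> S" for v
  proof -
    have "(f has_vector_derivative D1 f v) (at v)" using Suc.prems that by (auto intro: D1_works)
    then have "(g has_vector_derivative D1 f v) (at v)"
      using has_vector_derivative_transform_within_open[of f _ v S g] assms(1) that Suc.prems by auto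
    then show ?thesis by (rule differentiableI_vector)
  qed
  moreover have "Cn n S (D1 g)"
    using Suc.IH[of "D1 f" "D1 g"] Suc.prems D1_cong[OF assms(1)] by auto
  ultimately show ?case by simp
qed

lemma Cn_const: "Cn n S (\<lambda>v. c)"
proof (induction n arbitrary: c)
  case 0 then show ?case by simp
next
  case (Suc n)
  have "D1 (\<lambda>v. c) = (\<lambda>v. 0)" by (auto simp: D1_def fun_eq_iff intro!: vector_derivative_at)
  then show ?case using Suc by simp
qed

lemma Cn_add:
  assumes "open S" "Cn n S f" "Cn n S g"
  shows "Cn n S (\<lambda>v. f v + g v)"
  using assms(2,3)
proof (induction n arbitrary: f g)
  case 0 then show ?case by simp
next
  case (Suc n)
  have d: "((\<lambda>v. f v + g v) has_vector_derivative D1 f v + D1 g v) (at v)" if "v \<in> S" for v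
    using Suc.prems that by (auto intro!: derivative_intros D1_works)
  have "Cn n S (\<lambda>v. D1 f v + D1 g v)" using Suc by simp
  then have "Cn n S (D1 (\<lambda>v. f v + g v))"
    by (rule Cn_cong[OF assms(1), rotated]) (simp add: D1_eq[OF d])
  with d show ?case by (auto intro: differentiableI_vector)
qed

lemma Cn_uminus:
  assumes "open S" "Cn n S f"
  shows "Cn n S (\<lambda>v. - f v)"
  using assms(2)
proof (induction n arbitrary: f)
  case 0 then show ?case by simp
next
  case (Suc n)
  have d: "((\<lambda>v. - f v) has_vector_derivative - D1 f v) (at v)" if "v \<in> S" for v
    using Suc.prems that by (auto intro!: derivative_intros D1_works)
  have "Cn n S (\<lambda>v. - D1 f v)" using Suc by simp
  then have "Cn n S (D1 (\<lambda>v. - f v))"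
    by (rule Cn_cong[OF assms(1), rotated]) (simp add: D1_eq[OF d])
  with d show ?case by (auto intro: differentiableI_vector)
qed

lemma Cn_diff_fun:
  assumes "open S" "Cn n S f" "Cn n S g"
  shows "Cn n S (\<lambda>v. f v - g v)"
  using Cn_add[OF assms(1,2) Cn_uminus[OF assms(1,3)]] by simp

lemma Cn_bilinear:
  assumes bb: "bounded_bilinear bb" and S: "open S"
  shows "Cn n S f \<Longrightarrow> Cn n S g \<Longrightarrow> Cn n S (\<lambda>v. bb (f v) (g v))"
proof (induction n arbitrary: f g)
  case 0 then show ?case by simp
next
  case (Suc n)
  have d: "((\<lambda>v. bb (f v) (g v)) has_vector_derivative bb (f v) (D1 g v) + bb (D1 f v) (g v)) (at v)"
    if "v \<in> S" for v
    using Suc.prems that by (auto intro!: bounded_bilinear.has_vector_derivative[OF bb] D1_works)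
  have "Cn n S f" "Cn n S g" using Suc.prems Cn_mono by blast+
  have "Cn n S (\<lambda>v. bb (f v) (D1 g v) + bb (D1 f v) (g v))"
    using Suc \<open>Cn n S f\<close> \<open>Cn n S g\<close> by (intro Cn_add[OF S]) auto
  then have "Cn n S (D1 (\<lambda>v. bb (f v) (g v)))"
    by (rule Cn_cong[OF S, rotated]) (simp add: D1_eq[OF d])
  with d show ?case by (auto intro: differentiableI_vector)
qed

lemma bounded_bilinear_cross3: "bounded_bilinear cross3"
  using bilinear_conv_bounded_bilinear bilinear_cross by blast

lemma Cn_scaleR: "open S \<Longrightarrow> Cn n S f \<Longrightarrow> Cn n S g \<Longrightarrow> Cn n S (\<lambda>v. f v *\<^sub>R g v)"
  by (rule Cn_bilinear[OF bounded_bilinear_scaleR])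
lemma Cn_mult: "open S \<Longrightarrow> Cn n S (f::real\<Rightarrow>real) \<Longrightarrow> Cn n S g \<Longrightarrow> Cn n S (\<lambda>v. f v * g v)"
  by (rule Cn_bilinear[OF bounded_bilinear_mult])
lemma Cn_inner: "open S \<Longrightarrow> Cn n S (f::real\<Rightarrow>'a::real_inner) \<Longrightarrow> Cn n S g \<Longrightarrow> Cn n S (\<lambda>v. f v \<bullet> g v)"
  by (rule Cn_bilinear[OF bounded_bilinear_inner])
lemma Cn_cross: "open S \<Longrightarrow> Cn n S f \<Longrightarrow> Cn n S g \<Longrightarrow> Cn n S (\<lambda>v. cross3 (f v) (g v))"
  by (rule Cn_bilinear[OF bounded_bilinear_cross3])

lemma Cn_inverse:
  assumes S: "open S"
  shows "Cn n S (f::real\<Rightarrow>real) \<Longrightarrow> (\<And>v. v \<in> S \<Longrightarrow> f v \<noteq> 0) \<Longrightarrow> Cn n S (\<lambda>v. inverse (f v))"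
proof (induction n)
  case 0 then show ?case by simp
next
  case (Suc n)
  have d: "((\<lambda>v. inverse (f v)) has_real_derivative - (inverse (f v) * D1 f v * inverse (f v))) (at v)"
    if "v \<in> S" for v
    using Suc.prems that by (auto intro!: derivative_eq_intros D1_works_real)
  have "Cn n S (\<lambda>v. - (inverse (f v) * D1 f v * inverse (f v)))"
    using Suc Cn_mono by (intro Cn_uminus[OF S] Cn_mult[OF S]) auto
  then have "Cn n S (D1 (\<lambda>v. inverse (f v)))"
    by (rule Cn_cong[OF S, rotated]) (simp add: D1_eq_real[OF d])
  with d show ?case by (auto intro: differentiableI_vector simp: has_real_derivative_iff_has_vector_derivative)
qed

lemma Cn_sqrt:
  assumes S: "open S"
  shows "Cn n S (f::real\<Rightarrow>real) \<Longrightarrow> (\<And>v. v \<in> S \<Longrightarrow> f v > 0) \<Longrightarrow> Cn n S (\<lambda>v. sqrt (f v))"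
proof (induction n)
  case 0 then show ?case by simp
next
  case (Suc n)
  have d: "((\<lambda>v. sqrt (f v)) has_real_derivative inverse (sqrt (f v)) / 2 * D1 f v) (at v)"
    if "v \<in> S" for v
  proof -
    have "0 < f v" "f differentiable at v" using Suc.prems that by auto
    from DERIV_chain2[OF DERIV_real_sqrt[OF this(1)] D1_works_real[OF this(2)]] show ?thesis .
  qed
  have pos: "\<And>v. v \<in> S \<Longrightarrow> sqrt (f v) \<noteq> 0"
    using Suc.prems(2) by (metis less_irrefl real_sqrt_eq_zero_cancel_iff)
  have "Cn n S f" using Suc.prems Cn_mono by blast
  then have "Cn n S (\<lambda>v. sqrt (f v))" using Suc by blast
  then have "Cn n S (\<lambda>v. (inverse (sqrt (f v)) * (1/2)) * D1 f v)"
    using Suc pos by (intro Cn_mult[OF S] Cn_inverse[OF S] Cn_const) auto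
  then have "Cn n S (D1 (\<lambda>v. sqrt (f v)))"
    by (rule Cn_cong[OF S, rotated]) (simp add: D1_eq_real[OF d])
  with d show ?case by (auto intro: differentiableI_vector simp: has_real_derivative_iff_has_vector_derivative)
qed

lemma Cn_norm:
  assumes S: "open S" and f: "Cn n S (f::real \<Rightarrow> 'a::real_inner)" and nz: "\<And>v. v \<in> S \<Longrightarrow> f v \<noteq> 0"
  shows "Cn n S (\<lambda>v. norm (f v))"
proof -
  have "Cn n S (\<lambda>v. sqrt (f v \<bullet> f v))"
    using nz by (intro Cn_sqrt[OF S] Cn_inner[OF S f f]) auto
  then show ?thesis by (rule Cn_cong[OF S, rotated]) (simp add: norm_eq_sqrt_inner)
qed

lemma Cn_sincos:
  assumes S: "open S"
  shows "Cn n S (f::real\<Rightarrow>real) \<Longrightarrow> Cn n S (\<lambda>v. sin (f v)) \<and> Cn n S (\<lambda>v. cos (f v))"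
proof (induction n)
  case 0 then show ?case by simp
next
  case (Suc n)
  have d1: "((\<lambda>v. sin (f v)) has_real_derivative cos (f v) * D1 f v) (at v)" if "v \<in> S" for v
    using Suc.prems that by (auto intro!: derivative_eq_intros D1_works_real)
  have d2: "((\<lambda>v. cos (f v)) has_real_derivative - sin (f v) * D1 f v) (at v)" if "v \<in> S" for v
    using Suc.prems that by (auto intro!: derivative_eq_intros D1_works_real)
  have c1: "Cn n S (\<lambda>v. cos (f v) * D1 f v)" and c2: "Cn n S (\<lambda>v. - (sin (f v) * D1 f v))"
    using Suc Cn_mono by (auto intro!: Cn_mult[OF S] Cn_uminus[OF S])
  have "Cn n S (D1 (\<lambda>v. sin (f v)))"
    by (rule Cn_cong[OF S, rotated, OF c1]) (simp add: D1_eq_real[OF d1])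
  moreover have "Cn n S (D1 (\<lambda>v. cos (f v)))"
    by (rule Cn_cong[OF S, rotated, OF c2]) (simp add: D1_eq_real[OF d2])
  ultimately have "Cn n S (D1 (\<lambda>v. sin (f v)))" "Cn n S (D1 (\<lambda>v. cos (f v)))" by auto
  with d1 d2 show ?case by (auto intro: differentiableI_vector simp: has_real_derivative_iff_has_vector_derivative)
qed

lemma Du_D1: "Du f (t, v) = D1 (\<lambda>w. f (t, w)) v"
  by (simp add: Du_def D1_def)

lemma cross_cross3: "cross3 a (cross3 b c) = (a \<bullet> c) *\<^sub>R b - (a \<bullet> b) *\<^sub>R c"
  by (simp add: cross3_simps forall_3)

lemma D1_const_on:
  assumes "open S" "\<And>w. w \<in> S \<Longrightarrow> f w = c" "v \<in> S"
  shows "D1 f v = 0"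
proof -
  have "D1 f v = D1 (\<lambda>w. c) v" by (rule D1_cong[OF assms])
  also have "\<dots> = 0" by (rule D1_eq) simp
  finally show ?thesis .
qed

lemma D1_bb:
  assumes "bounded_bilinear bb" "f differentiable at v" "g differentiable at v"
  shows "D1 (\<lambda>v. bb (f v) (g v)) v = bb (f v) (D1 g v) + bb (D1 f v) (g v)"
  by (rule D1_eq, rule bounded_bilinear.has_vector_derivative[OF assms(1)])
     (use assms D1_works in auto)

lemmas D1_scaleR = D1_bb[OF bounded_bilinear_scaleR]
lemmas D1_mult = D1_bb[OF bounded_bilinear_mult]
lemmas D1_inner = D1_bb[OF bounded_bilinear_inner]
lemmas D1_cross = D1_bb[OF bounded_bilinear_cross3]

lemma D1_add: "f differentiable at v \<Longrightarrow> g differentiable at v \<Longrightarrow> D1 (\<lambda>v. f v + g v) v = D1 f v + D1 g v"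
  by (rule D1_eq) (auto intro!: derivative_intros D1_works)
lemma D1_minus: "f differentiable at v \<Longrightarrow> g differentiable at v \<Longrightarrow> D1 (\<lambda>v. f v - g v) v = D1 f v - D1 g v"
  by (rule D1_eq) (auto intro!: derivative_intros D1_works)

lemma D1_sin: "(f::real\<Rightarrow>real) differentiable at v \<Longrightarrow> D1 (\<lambda>v. sin (f v)) v = cos (f v) * D1 f v"
  by (rule D1_eq_real) (auto intro!: derivative_eq_intros D1_works_real)
lemma D1_cos: "(f::real\<Rightarrow>real) differentiable at v \<Longrightarrow> D1 (\<lambda>v. cos (f v)) v = - sin (f v) * D1 f v"
  by (rule D1_eq_real) (auto intro!: derivative_eq_intros D1_works_real)
lemma D1_inverse: "(f::real\<Rightarrow>real) differentiable at v \<Longrightarrow> f v \<noteq> 0 \<Longrightarrow>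
    D1 (\<lambda>v. inverse (f v)) v = - D1 f v / (f v)^2"
  by (rule D1_eq_real) (auto intro!: derivative_eq_intros D1_works_real simp: power2_eq_square field_simps)

lemma Cn_subset: "S' \<subseteq> S \<Longrightarrow> Cn n S f \<Longrightarrow> Cn n S' f"
  by (induction n arbitrary: f) auto

lemma Cn_differentiable': "Cn n S f \<Longrightarrow> 0 < n \<Longrightarrow> v \<in> S \<Longrightarrow> f differentiable at v"
  by (cases n) auto

locale spatial =
  fixes \<gamma> :: "real \<times> real \<Rightarrow> real^3" and \<theta> :: "real \<times> real \<Rightarrow> real" and t :: real
  assumes x0C: "\<And>n. Cn n UNIV (\<lambda>v. \<gamma> (t, v))"
    and reg: "\<And>v. Du \<gamma> (t, v) \<noteq> 0"
    and thC: "Cn 2 UNIV (\<lambda>v. \<theta> (t, v))"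
begin

abbreviation "x0 \<equiv> (\<lambda>v. \<gamma> (t, v))"
abbreviation "x1 \<equiv> D1 x0"
abbreviation "x2 \<equiv> D1 x1"
abbreviation "g \<equiv> (\<lambda>v. speed \<gamma> (t, v))"
abbreviation "T \<equiv> (\<lambda>v. tangent \<gamma> (t, v))"
abbreviation "W \<equiv> (\<lambda>v. Ds \<gamma> (tangent \<gamma>) (t, v))"
abbreviation "k \<equiv> (\<lambda>v. curvature \<gamma> (t, v))"
abbreviation "N \<equiv> (\<lambda>v. pnormal \<gamma> (t, v))"
abbreviation "B \<equiv> (\<lambda>v. binormal \<gamma> (t, v))"
abbreviation "tau \<equiv> (\<lambda>v. torsion \<gamma> (t, v))"
abbreviation "th \<equiv> (\<lambda>v. \<theta> (t, v))"

lemma x1C: "Cn n UNIV x1"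
  using x0C[of "Suc n"] by simp
lemma x1nz: "x1 v \<noteq> 0"
  using reg[of v] by (simp add: Du_D1)

lemma g_eq: "g v = norm (x1 v)"
  by (simp add: speed_def Du_D1)
lemma g_pos: "g v > 0"
  using x1nz by (simp add: g_eq)
lemma g_nz: "g v \<noteq> 0"
  using g_pos[of v] by linarith
lemma gC: "Cn n UNIV g"
proof -
  have "Cn n UNIV (\<lambda>v. norm (x1 v))" by (rule Cn_norm) (auto simp: x1C x1nz)
  then show ?thesis by (simp add: g_eq)
qed

lemma T_eq: "T v = inverse (g v) *\<^sub>R x1 v"
  by (simp add: tangent_def Ds_def Du_D1 divide_inverse)
lemma TC: "Cn n UNIV T"
proof -
  have "Cn n UNIV (\<lambda>v. inverse (g v) *\<^sub>R x1 v)"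
    using g_pos by (intro Cn_scaleR Cn_inverse gC x1C) (auto simp: g_nz)
  then show ?thesis by (simp add: T_eq)
qed

lemma W_eq: "W v = inverse (g v) *\<^sub>R D1 T v"
  by (simp add: Ds_def Du_D1 divide_inverse)
lemma WC: "Cn n UNIV W"
proof -
  have "Cn n UNIV (\<lambda>v. inverse (g v) *\<^sub>R D1 T v)"
    using g_pos TC[of "Suc n"] by (intro Cn_scaleR Cn_inverse gC) (auto simp: g_nz)
  then show ?thesis by (simp add: W_eq)
qed

lemma k_eq: "k v = norm (W v)"
  by (simp add: curvature_def)

definition "U = {v. W v \<noteq> 0}"
lemma U_open: "open U"
proof -
  have "continuous_on UNIV W"
    using WC[of 1] by (auto intro!: differentiable_imp_continuous_on simp: differentiable_on_def
        intro: differentiable_at_withinI)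
  then show ?thesis unfolding U_def by (intro open_Collect_neq) auto
qed
lemma k_pos: "v \<in> U \<Longrightarrow> k v > 0"
  by (simp add: U_def k_eq)
lemma kC: "Cn n U k"
proof -
  have "Cn n U (\<lambda>v. norm (W v))" by (rule Cn_norm[OF U_open]) (auto simp: U_def intro: Cn_subset[OF _ WC])
  then show ?thesis by (simp add: k_eq)
qed

end

lemma basis3:
  fixes T N y :: "real^3"
  assumes "T \<bullet> T = 1" "N \<bullet> N = 1" "T \<bullet> N = 0"
  shows "y = (y \<bullet> T) *\<^sub>R T + (y \<bullet> N) *\<^sub>R N + (y \<bullet> cross3 T N) *\<^sub>R cross3 T N"
proof -
  define B where "B = cross3 T N"
  define r where "r = y - ((y \<bullet> T) *\<^sub>R T + (y \<bullet> N) *\<^sub>R N + (y \<bullet> B) *\<^sub>R B)"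
  have BT: "B \<bullet> T = 0" "B \<bullet> N = 0" unfolding B_def by (simp_all add: dot_cross_self inner_commute)
  have BB: "B \<bullet> B = 1"
  proof -
    have "(norm B)\<^sup>2 = (norm T * norm N)\<^sup>2" using norm_cross_dot[of T N] assms(3) B_def by simp
    also have "\<dots> = 1" using assms(1,2) by (simp add: power_mult_distrib power2_norm_eq_inner)
    finally show ?thesis by (simp add: power2_norm_eq_inner)
  qed
  have TB: "T \<bullet> B = 0" "N \<bullet> B = 0" "N \<bullet> T = 0" using BT assms(3) by (simp_all add: inner_commute)
  have rT: "r \<bullet> T = 0" "r \<bullet> N = 0" "r \<bullet> B = 0"
    unfolding r_def using assms BT BB TB by (simp_all add: inner_diff_left inner_add_left)
  have cr: "cross3 B r = 0"
  proof -
    have "cross3 B r = - cross3 r B" by (rule cross_skew)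
    also have "\<dots> = - ((r \<bullet> N) *\<^sub>R T - (r \<bullet> T) *\<^sub>R N)" unfolding B_def by (simp add: cross_cross3)
    also have "\<dots> = 0" using rT by simp
    finally show ?thesis .
  qed
  have "(norm B * norm r)\<^sup>2 = 0" using norm_cross_dot[of B r] cr rT(3) by (simp add: inner_commute)
  moreover have "norm B = 1" using BB by (simp add: norm_eq_sqrt_inner)
  ultimately have "r = 0" by simp
  then show ?thesis unfolding r_def B_def by (simp add: algebra_simps)
qed

context spatial begin

lemma N_eq: "N v = inverse (k v) *\<^sub>R W v"
  by (simp add: pnormal_def divide_inverse)
lemma k_nz: "v \<in> U \<Longrightarrow> k v \<noteq> 0"
  using k_pos[of v] by linarith
lemma NC: "Cn n U N"
proof -
  have "Cn n U (\<lambda>v. inverse (k v) *\<^sub>R W v)"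
    using k_nz by (intro Cn_scaleR[OF U_open] Cn_inverse[OF U_open] kC Cn_subset[OF _ WC])
      (auto simp: U_def)
  then show ?thesis by (rule Cn_cong[OF U_open, rotated]) (simp add: N_eq)
qed
lemma B_eq: "B v = cross3 (T v) (N v)"
  by (simp add: binormal_def)
lemma BC: "Cn n U B"
  unfolding B_eq by (intro Cn_cross[OF U_open] NC Cn_subset[OF _ TC]) auto
lemma tau_eq: "tau v = (inverse (g v) *\<^sub>R D1 N v) \<bullet> B v"
  by (simp add: torsion_def Ds_def Du_D1 divide_inverse)
lemma tauC: "Cn n U tau"
proof -
  have "Cn n U (\<lambda>v. (inverse (g v) *\<^sub>R D1 N v) \<bullet> B v)"
  proof -
    have "Cn n U (\<lambda>v. inverse (g v))" by (rule Cn_subset[OF _ Cn_inverse[OF open_UNIV gC]]) (auto simp: g_nz)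
    then show ?thesis using NC[of "Suc n"] by (intro Cn_inner[OF U_open] Cn_scaleR[OF U_open] BC) auto
  qed
  then show ?thesis by (simp add: tau_eq)
qed
lemma thCU: "Cn 2 U th"
  using thC by (rule Cn_subset[rotated]) auto

lemma TT: "T v \<bullet> T v = 1"
proof -
  have "T v \<bullet> T v = (norm (T v))\<^sup>2" by (simp add: power2_norm_eq_inner)
  also have "norm (T v) = 1" using x1nz by (simp add: T_eq g_eq)
  finally show ?thesis by simp
qed
lemma T_diff: "T differentiable at v"
  using TC[of 1] by auto
lemma TdT: "T v \<bullet> D1 T v = 0"
proof -
  have "D1 (\<lambda>v. T v \<bullet> T v) v = T v \<bullet> D1 T v + D1 T v \<bullet> T v"
    by (rule D1_inner) (auto simp: T_diff)
  moreover have "D1 (\<lambda>v. T v \<bullet> T v) v = 0" by (rule D1_const_on[of UNIV]) (auto simp: TT)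
  ultimately show ?thesis by (simp add: inner_commute)
qed
lemma TW: "T v \<bullet> W v = 0"
  by (simp add: W_eq TdT)
lemma dT: "D1 T v = g v *\<^sub>R W v"
  by (simp add: W_eq g_nz)
lemma kN: "k v *\<^sub>R N v = W v"
  by (cases "W v = 0") (simp_all add: N_eq k_eq)
lemma kB: "k v *\<^sub>R B v = cross3 (T v) (W v)"
  by (simp add: B_eq cross_mult_right[symmetric] kN)

lemma NN: "v \<in> U \<Longrightarrow> N v \<bullet> N v = 1"
  by (simp add: N_eq k_eq U_def power2_norm_eq_inner[symmetric] field_simps)
lemma TN: "T v \<bullet> N v = 0"
  by (simp add: N_eq TW)
lemma BT: "B v \<bullet> T v = 0" "B v \<bullet> N v = 0" "T v \<bullet> B v = 0" "N v \<bullet> B v = 0"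
  by (simp_all add: B_eq dot_cross_self inner_commute)
lemma BB: "v \<in> U \<Longrightarrow> B v \<bullet> B v = 1"
proof -
  assume v: "v \<in> U"
  have "(norm (B v))\<^sup>2 = (norm (T v) * norm (N v))\<^sup>2" using norm_cross_dot[of "T v" "N v"] TN B_eq by simp
  also have "\<dots> = 1" using TT NN[OF v] by (simp add: power_mult_distrib power2_norm_eq_inner)
  finally show ?thesis by (simp add: power2_norm_eq_inner)
qed
lemma dT_N: "v \<in> U \<Longrightarrow> D1 T v = (g v * k v) *\<^sub>R N v"
  by (simp add: dT kN[symmetric])

lemma N_diff: "v \<in> U \<Longrightarrow> N differentiable at v"
  using NC[of 1] by auto

lemma dN_N: "v \<in> U \<Longrightarrow> D1 N v \<bullet> N v = 0"
proof -
  assume v: "v \<in> U"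
  have "D1 (\<lambda>v. N v \<bullet> N v) v = N v \<bullet> D1 N v + D1 N v \<bullet> N v"
    by (rule D1_inner) (auto simp: N_diff v)
  moreover have "D1 (\<lambda>v. N v \<bullet> N v) v = 0" by (rule D1_const_on[OF U_open _ v]) (auto simp: NN)
  ultimately show ?thesis by (simp add: inner_commute)
qed
lemma dN_T: "v \<in> U \<Longrightarrow> D1 N v \<bullet> T v = - (g v * k v)"
proof -
  assume v: "v \<in> U"
  have "D1 (\<lambda>v. T v \<bullet> N v) v = T v \<bullet> D1 N v + D1 T v \<bullet> N v"
    by (rule D1_inner) (auto simp: N_diff v T_diff)
  moreover have "D1 (\<lambda>v. T v \<bullet> N v) v = 0" by (rule D1_const_on[of UNIV]) (auto simp: TN)
  ultimately show ?thesis using NN[OF v] by (simp add: inner_commute dT_N[OF v])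
qed
lemma dN_B: "D1 N v \<bullet> B v = g v * tau v"
  by (simp add: tau_eq g_nz)
lemma dN: "v \<in> U \<Longrightarrow> D1 N v = (- (g v * k v)) *\<^sub>R T v + (g v * tau v) *\<^sub>R B v"
  using basis3[OF TT NN TN, of v "D1 N v"] dN_N dN_T dN_B B_eq by simp
lemma dB: "v \<in> U \<Longrightarrow> D1 B v = (- (g v * tau v)) *\<^sub>R N v"
proof -
  assume v: "v \<in> U"
  have "D1 B v = D1 (\<lambda>v. cross3 (T v) (N v)) v" by (simp add: B_eq)
  also have "\<dots> = cross3 (T v) (D1 N v) + cross3 (D1 T v) (N v)"
    by (rule D1_cross) (auto simp: N_diff v T_diff)
  also have "\<dots> = cross3 (T v) ((g v * tau v) *\<^sub>R B v - (g v * k v) *\<^sub>R T v)"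
    by (simp add: dN v dT_N cross_mult_left)
  also have "\<dots> = (g v * tau v) *\<^sub>R cross3 (T v) (B v) - (g v * k v) *\<^sub>R cross3 (T v) (T v)"
    by (simp add: Cross3.right_diff_distrib cross_mult_right)
  also have "\<dots> = (- (g v * tau v)) *\<^sub>R N v"
    using TT[of v] TN[of v] by (simp add: B_eq cross_cross3)
  finally show ?thesis .
qed

end


context spatial begin

lemma g_diff: "g differentiable at v" using gC[of 1] by auto
lemma x1_diff: "x1 differentiable at v" using x1C[of 1] by auto
lemma dg: "D1 g v = (x1 v \<bullet> x2 v) / g v"
proof -
  have "D1 (\<lambda>v. g v * g v) v = g v * D1 g v + D1 g v * g v" by (rule D1_mult) (auto simp: g_diff)
  moreover have "D1 (\<lambda>v. g v * g v) v = D1 (\<lambda>v. x1 v \<bullet> x1 v) v"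
    by (rule D1_cong[of UNIV]) (auto simp: g_eq norm_eq_sqrt_inner)
  moreover have "D1 (\<lambda>v. x1 v \<bullet> x1 v) v = x1 v \<bullet> x2 v + x2 v \<bullet> x1 v" by (rule D1_inner) (auto simp: x1_diff)
  ultimately have "2 * g v * D1 g v = 2 * (x1 v \<bullet> x2 v)" by (simp add: inner_commute)
  then show ?thesis using g_nz[of v] by (simp add: field_simps)
qed
lemma x1_eq: "x1 v = g v *\<^sub>R T v"
  by (simp add: T_eq g_nz)
lemma W_formula: "W v = (inverse (g v))\<^sup>2 *\<^sub>R x2 v - ((x1 v \<bullet> x2 v) / (g v)^4) *\<^sub>R x1 v"
proof -
  have "D1 T v = D1 (\<lambda>v. inverse (g v) *\<^sub>R x1 v) v" by (simp add: T_eq)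
  also have "\<dots> = inverse (g v) *\<^sub>R x2 v + D1 (\<lambda>v. inverse (g v)) v *\<^sub>R x1 v"
    by (rule D1_scaleR) (auto simp: x1_diff g_diff g_nz)
  also have "D1 (\<lambda>v. inverse (g v)) v = - D1 g v / (g v)^2"
    by (rule D1_inverse) (auto simp: g_diff g_nz)
  finally have dT': "D1 T v = inverse (g v) *\<^sub>R x2 v + (- D1 g v / (g v)^2) *\<^sub>R x1 v" .
  have "W v = (inverse (g v) * inverse (g v)) *\<^sub>R x2 v + (inverse (g v) * (- D1 g v / (g v)^2)) *\<^sub>R x1 v"
    unfolding W_eq dT' scaleR_add_right scaleR_scaleR by simp
  moreover have "inverse (g v) * (- D1 g v / (g v)^2) = - ((x1 v \<bullet> x2 v) / (g v)^4)"
    using g_nz[of v] by (simp add: dg field_simps power2_eq_square power4_eq_xxxx)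
  ultimately show ?thesis by (simp add: power2_eq_square)
qed

lemma x2_U: "v \<in> U \<Longrightarrow> x2 v = D1 g v *\<^sub>R T v + (g v * g v * k v) *\<^sub>R N v"
proof -
  assume v: "v \<in> U"
  have "x2 v = D1 (\<lambda>v. g v *\<^sub>R T v) v" by (simp add: x1_eq[abs_def])
  also have "\<dots> = g v *\<^sub>R D1 T v + D1 g v *\<^sub>R T v" by (rule D1_scaleR) (auto simp: g_diff T_diff)
  finally show ?thesis by (simp add: dT_N v)
qed

abbreviation "V \<equiv> (\<lambda>v. curvature \<gamma> (t, v) *\<^sub>R theta_normal \<gamma> \<theta> (t, v))"
abbreviation "p1 \<equiv> (\<lambda>v. psi1 \<gamma> \<theta> (t, v))"
abbreviation "p2 \<equiv> (\<lambda>v. psi2 \<gamma> \<theta> (t, v))"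
abbreviation "a \<equiv> (\<lambda>v. D1 p1 v - p2 v * g v * tau v)"
abbreviation "b \<equiv> (\<lambda>v. - (p1 v * g v * k v))"
abbreviation "c \<equiv> (\<lambda>v. p1 v * g v * tau v + D1 p2 v)"

lemma V_eq: "V v = p1 v *\<^sub>R N v + p2 v *\<^sub>R B v"
  by (simp add: theta_normal_def psi1_def psi2_def scaleR_add_right)

lemma p1C: "Cn 2 U p1"
  unfolding psi1_def using Cn_sincos[OF U_open thCU] by (intro Cn_mult[OF U_open] kC) auto
lemma p2C: "Cn 2 U p2"
  unfolding psi2_def using Cn_sincos[OF U_open thCU] by (intro Cn_mult[OF U_open] kC) auto

lemma B_diff: "v \<in> U \<Longrightarrow> B differentiable at v"
  using BC[of 1] by auto
lemma k_diff: "v \<in> U \<Longrightarrow> k differentiable at v"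
  using kC[of 1] by auto
lemma tau_diff: "v \<in> U \<Longrightarrow> tau differentiable at v"
  using tauC[of 1] by auto
lemma p1_diff: "v \<in> U \<Longrightarrow> p1 differentiable at v"
  using p1C by (auto simp: numeral_2_eq_2)
lemma p2_diff: "v \<in> U \<Longrightarrow> p2 differentiable at v"
  using p2C by (auto simp: numeral_2_eq_2)
lemma th_diff: "th differentiable at v"
  using thC by (auto simp: numeral_2_eq_2)
lemma dth_diff: "D1 th differentiable at v"
  using thC by (auto simp: numeral_2_eq_2)
lemma dp1_diff: "v \<in> U \<Longrightarrow> D1 p1 differentiable at v"
  using p1C by (auto simp: numeral_2_eq_2)
lemma dp2_diff: "v \<in> U \<Longrightarrow> D1 p2 differentiable at v"
  using p2C by (auto simp: numeral_2_eq_2)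
lemma dk_diff: "v \<in> U \<Longrightarrow> D1 k differentiable at v"
  using kC[of 2] by (auto simp: numeral_2_eq_2)

lemma dV: "v \<in> U \<Longrightarrow> D1 V v = a v *\<^sub>R N v + b v *\<^sub>R T v + c v *\<^sub>R B v"
proof -
  assume v: "v \<in> U"
  have "D1 V v = D1 (\<lambda>v. p1 v *\<^sub>R N v + p2 v *\<^sub>R B v) v" by (simp add: V_eq)
  also have "\<dots> = D1 (\<lambda>v. p1 v *\<^sub>R N v) v + D1 (\<lambda>v. p2 v *\<^sub>R B v) v"
    by (rule D1_add) (auto intro!: differentiable_scaleR simp: v p1_diff p2_diff N_diff B_diff)
  also have "D1 (\<lambda>v. p1 v *\<^sub>R N v) v = p1 v *\<^sub>R D1 N v + D1 p1 v *\<^sub>R N v"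
    by (rule D1_scaleR) (auto simp: v p1_diff N_diff)
  also have "D1 (\<lambda>v. p2 v *\<^sub>R B v) v = p2 v *\<^sub>R D1 B v + D1 p2 v *\<^sub>R B v"
    by (rule D1_scaleR) (auto simp: v p2_diff B_diff)
  finally show ?thesis
    by (simp add: dN dB v algebra_simps)
qed

end


context spatial begin

lemma sinC: "Cn 2 UNIV (\<lambda>v. sin (th v))" and cosC: "Cn 2 UNIV (\<lambda>v. cos (th v))"
  using Cn_sincos[OF open_UNIV thC] by auto
lemma sin_diff: "(\<lambda>v. sin (th v)) differentiable at v"
  using sinC by (auto simp: numeral_2_eq_2)
lemma cos_diff: "(\<lambda>v. cos (th v)) differentiable at v"
  using cosC by (auto simp: numeral_2_eq_2)
lemma g_diff': "g differentiable at v" by (rule g_diff)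

lemma p1_fun: "p1 = (\<lambda>v. k v * cos (th v))" by (simp add: psi1_def[abs_def])
lemma p2_fun: "p2 = (\<lambda>v. k v * sin (th v))" by (simp add: psi2_def[abs_def])

lemma dp1: "v \<in> U \<Longrightarrow> D1 p1 v = D1 k v * cos (th v) - k v * sin (th v) * D1 th v"
proof -
  assume v: "v \<in> U"
  have "D1 p1 v = k v * D1 (\<lambda>v. cos (th v)) v + D1 k v * cos (th v)"
    unfolding p1_fun by (rule D1_mult) (auto simp: v k_diff cos_diff)
  then show ?thesis by (simp add: D1_cos th_diff algebra_simps)
qed
lemma dp2: "v \<in> U \<Longrightarrow> D1 p2 v = D1 k v * sin (th v) + k v * cos (th v) * D1 th v"
proof -
  assume v: "v \<in> U"
  have "D1 p2 v = k v * D1 (\<lambda>v. sin (th v)) v + D1 k v * sin (th v)"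
    unfolding p2_fun by (rule D1_mult) (auto simp: v k_diff sin_diff)
  then show ?thesis by (simp add: D1_sin th_diff algebra_simps)
qed

lemma ddp2: "u \<in> U \<Longrightarrow> D1 (D1 p2) u = D1 (D1 k) u * sin (th u) + 2 * D1 k u * cos (th u) * D1 th u
    - k u * sin (th u) * (D1 th u)\<^sup>2 + k u * cos (th u) * D1 (D1 th) u"
proof -
  assume u: "u \<in> U"
  have "D1 (D1 p2) u = D1 (\<lambda>v. D1 k v * sin (th v) + (k v * cos (th v)) * D1 th v) u"
    by (rule D1_cong[OF U_open _ u]) (simp add: dp2 mult.assoc)
  also have "\<dots> = D1 (\<lambda>v. D1 k v * sin (th v)) u + D1 (\<lambda>v. (k v * cos (th v)) * D1 th v) u"
    by (rule D1_add) (auto intro!: differentiable_mult simp: u dk_diff sin_diff k_diff cos_diff dth_diff)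
  also have "D1 (\<lambda>v. D1 k v * sin (th v)) u = D1 k u * D1 (\<lambda>v. sin (th v)) u + D1 (D1 k) u * sin (th u)"
    by (rule D1_mult) (auto simp: u dk_diff sin_diff)
  also have "D1 (\<lambda>v. (k v * cos (th v)) * D1 th v) u = (k u * cos (th u)) * D1 (D1 th) u + D1 (\<lambda>v. k v * cos (th v)) u * D1 th u"
    by (rule D1_mult) (auto intro!: differentiable_mult simp: u k_diff cos_diff dth_diff)
  also have "D1 (\<lambda>v. k v * cos (th v)) u = D1 p1 u" by (simp add: p1_fun)
  finally show ?thesis by (simp add: dp1 u D1_sin th_diff power2_eq_square algebra_simps)
qed

lemma a_diff: "v \<in> U \<Longrightarrow> a differentiable at v"
  by (auto intro!: differentiable_mult differentiable_diff simp: dp1_diff p2_diff g_diff tau_diff)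
lemma b_diff: "v \<in> U \<Longrightarrow> b differentiable at v"
  by (auto intro!: differentiable_mult differentiable_minus simp: p1_diff g_diff k_diff)
lemma c_diff: "v \<in> U \<Longrightarrow> c differentiable at v"
  by (auto intro!: differentiable_mult differentiable_add simp: dp2_diff p1_diff g_diff tau_diff)

lemma dc: "u \<in> U \<Longrightarrow> D1 c u = D1 p1 u * g u * tau u + p1 u * D1 g u * tau u + p1 u * g u * D1 tau u + D1 (D1 p2) u"
proof -
  assume u: "u \<in> U"
  have "D1 c u = D1 (\<lambda>v. (p1 v * g v) * tau v) u + D1 (D1 p2) u"
    by (rule D1_add) (auto intro!: differentiable_mult simp: u dp2_diff p1_diff g_diff tau_diff)
  also have "D1 (\<lambda>v. (p1 v * g v) * tau v) u = (p1 u * g u) * D1 tau u + D1 (\<lambda>v. p1 v * g v) u * tau u"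
    by (rule D1_mult) (auto intro!: differentiable_mult simp: u p1_diff g_diff tau_diff)
  also have "D1 (\<lambda>v. p1 v * g v) u = p1 u * D1 g u + D1 p1 u * g u"
    by (rule D1_mult) (auto simp: u p1_diff g_diff)
  finally show ?thesis by (simp add: algebra_simps)
qed

lemma d2V_B: "u \<in> U \<Longrightarrow> D1 (D1 V) u \<bullet> B u = a u * g u * tau u + D1 c u"
proof -
  assume u: "u \<in> U"
  have "D1 (D1 V) u = D1 (\<lambda>v. (a v *\<^sub>R N v + b v *\<^sub>R T v) + c v *\<^sub>R B v) u"
    by (rule D1_cong[OF U_open _ u]) (simp add: dV)
  also have "\<dots> = D1 (\<lambda>v. a v *\<^sub>R N v + b v *\<^sub>R T v) u + D1 (\<lambda>v. c v *\<^sub>R B v) u"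
    by (rule D1_add; intro differentiable_add differentiable_scaleR) (auto intro!: differentiable_mult simp: u a_diff b_diff c_diff N_diff T_diff B_diff p1_diff g_diff tau_diff dp2_diff)
  also have "D1 (\<lambda>v. a v *\<^sub>R N v + b v *\<^sub>R T v) u = D1 (\<lambda>v. a v *\<^sub>R N v) u + D1 (\<lambda>v. b v *\<^sub>R T v) u"
    by (rule D1_add; intro differentiable_scaleR) (auto simp: u a_diff b_diff N_diff T_diff)
  also have "D1 (\<lambda>v. a v *\<^sub>R N v) u = a u *\<^sub>R D1 N u + D1 a u *\<^sub>R N u"
    by (rule D1_scaleR) (auto simp: u a_diff N_diff)
  also have "D1 (\<lambda>v. b v *\<^sub>R T v) u = b u *\<^sub>R D1 T u + D1 b u *\<^sub>R T u"
    by (rule D1_scaleR) (auto simp: u b_diff T_diff)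
  also have "D1 (\<lambda>v. c v *\<^sub>R B v) u = c u *\<^sub>R D1 B u + D1 c u *\<^sub>R B u"
    by (rule D1_scaleR) (auto simp: u c_diff B_diff)
  finally show ?thesis
    using BB[OF u] BT[of u] dN_B[of u]
    by (simp add: inner_add_left inner_diff_left dT_N u dB)
qed

end


context spatial begin

lemma ortho: "u \<in> U \<Longrightarrow> T u \<bullet> T u = 1 \<and> N u \<bullet> N u = 1 \<and> B u \<bullet> B u = 1 \<and> T u \<bullet> N u = 0 \<and> N u \<bullet> T u = 0
   \<and> T u \<bullet> B u = 0 \<and> B u \<bullet> T u = 0 \<and> N u \<bullet> B u = 0 \<and> B u \<bullet> N u = 0"
  using TT[of u] NN[of u] BB[of u] TN[of u] BT[of u] by (simp add: inner_commute)

lemma beta_eq: "theta_binormal \<gamma> \<theta> (t, v) = (- sin (th v)) *\<^sub>R N v + cos (th v) *\<^sub>R B v"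
  by (simp add: theta_binormal_def)

lemma V_beta: "u \<in> U \<Longrightarrow> D1 V u \<bullet> theta_binormal \<gamma> \<theta> (t, u) = - sin (th u) * a u + cos (th u) * c u"
  using ortho[of u] by (simp add: dV beta_eq inner_add_left inner_add_right inner_diff_left inner_diff_right)

lemma B_dV: "u \<in> U \<Longrightarrow> B u \<bullet> D1 V u = c u"
  using ortho[of u] by (simp add: dV inner_add_right inner_diff_right)

lemma x2_beta: "u \<in> U \<Longrightarrow> x2 u \<bullet> theta_binormal \<gamma> \<theta> (t, u) = - (g u * g u * k u * sin (th u))"
  using ortho[of u] by (simp add: x2_U beta_eq inner_add_left inner_add_right inner_diff_left inner_diff_right)

lemma VV: "u \<in> U \<Longrightarrow> V u \<bullet> V u = k u * k u"
proof -
  assume u: "u \<in> U"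
  have "V u \<bullet> V u = p1 u * p1 u + p2 u * p2 u"
    using ortho[OF u] by (simp add: V_eq inner_add_left inner_add_right)
  also have "\<dots> = k u * k u"
    unfolding psi1_def psi2_def using sin_cos_squared_add[of "th u"] by algebra
  finally show ?thesis .
qed

lemma x1V: "x1 u \<bullet> V u = 0"
  using TN[of u] BT[of u] by (simp add: V_eq x1_eq inner_add_right)
lemma x1x1: "x1 u \<bullet> x1 u = g u * g u"
  using TT[of u] by (simp add: x1_eq)
lemma x1x2: "u \<in> U \<Longrightarrow> x1 u \<bullet> x2 u = g u * D1 g u"
  using TT[of u] TN[of u] by (simp add: x1_eq x2_U inner_add_right)

lemma PP: "cross3 (T v) (W v) \<bullet> cross3 (T v) (W v) = W v \<bullet> W v"
proof -
  have "(norm (cross3 (T v) (W v)))\<^sup>2 = (norm (T v) * norm (W v))\<^sup>2"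
    using norm_cross_dot[of "T v" "W v"] TW[of v] by simp
  moreover have "norm (T v) = 1" using TT[of v] by (simp add: norm_eq_sqrt_inner)
  ultimately show ?thesis by (simp add: power2_norm_eq_inner)
qed
lemma PW: "cross3 (T v) (W v) \<bullet> W v = 0"
  by (simp add: dot_cross_self)

lemma Ds_real: "Ds \<gamma> f (t, v) = inverse (g v) * D1 (\<lambda>w. f (t, w)) v"
  by (simp add: Ds_def Du_D1 divide_inverse)

lemma Dsk: "Ds \<gamma> (curvature \<gamma>) (t, u) = inverse (g u) * D1 k u"
  by (simp add: Ds_real)

lemma dinvg: "D1 (\<lambda>v. inverse (g v)) v = - D1 g v / (g v)\<^sup>2"
  by (rule D1_inverse) (auto simp: g_diff g_nz)

lemma Dssk: "u \<in> U \<Longrightarrow> Ds \<gamma> (Ds \<gamma> (curvature \<gamma>)) (t, u)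
    = inverse (g u) * (inverse (g u) * D1 (D1 k) u + (- D1 g u / (g u)\<^sup>2) * D1 k u)"
proof -
  assume u: "u \<in> U"
  have "Ds \<gamma> (Ds \<gamma> (curvature \<gamma>)) (t, u) = inverse (g u) * D1 (\<lambda>v. inverse (g v) * D1 k v) u"
    by (simp add: Ds_real)
  also have "D1 (\<lambda>v. inverse (g v) * D1 k v) u = inverse (g u) * D1 (D1 k) u + D1 (\<lambda>v. inverse (g v)) u * D1 k u"
    by (rule D1_mult) (auto simp: u dk_diff g_diff g_nz)
  finally show ?thesis by (simp add: dinvg)
qed

lemma p3_val: "psi3 \<gamma> \<theta> (t, u) = tau u + inverse (g u) * D1 th u"
  by (simp add: psi3_def Ds_real)

lemma Dsp3: "u \<in> U \<Longrightarrow> Ds \<gamma> (psi3 \<gamma> \<theta>) (t, u)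
    = inverse (g u) * (D1 tau u + (inverse (g u) * D1 (D1 th) u + (- D1 g u / (g u)\<^sup>2) * D1 th u))"
proof -
  assume u: "u \<in> U"
  have "Ds \<gamma> (psi3 \<gamma> \<theta>) (t, u) = inverse (g u) * D1 (\<lambda>v. tau v + inverse (g v) * D1 th v) u"
    by (simp add: Ds_real p3_val)
  also have "D1 (\<lambda>v. tau v + inverse (g v) * D1 th v) u = D1 tau u + D1 (\<lambda>v. inverse (g v) * D1 th v) u"
    by (rule D1_add) (auto intro!: differentiable_mult simp: u tau_diff dth_diff g_diff g_nz)
  also have "D1 (\<lambda>v. inverse (g v) * D1 th v) u = inverse (g u) * D1 (D1 th) u + D1 (\<lambda>v. inverse (g v)) u * D1 th u"
    by (rule D1_mult) (auto simp: u dth_diff g_diff g_nz)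
  finally show ?thesis by (simp add: dinvg)
qed

end

lemma final_alg2:
  fixes g gd K kd kdd tau taud thd thdd UPS s c Pone Ptwo Pthr DPc DK DDK MEAN GAUSS A CC DC Aa Ab Ac :: real
  assumes g: "g \<noteq> 0" and k: "K \<noteq> 0" and sc: "s\<^sup>2 + c\<^sup>2 = 1"
    and Pone: "Pone = K*c" and Ptwo: "Ptwo = K* s"
    and A: "A = (kd*c - K* s*thd) - Ptwo*g*tau" and CC: "CC = Pone*g*tau + (kd* s + K*c*thd)"
    and DC: "DC = (kd*c - K* s*thd)*g*tau + Pone*gd*tau + Pone*g*taud + (kdd* s + 2*kd*c*thd - K* s*thd\<^sup>2 + K*c*thdd)"
    and Aa: "Aa = -(g*g*K* s)" and Ab: "Ab = -s*A + c*CC"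
    and Ac: "Ac = K*UPS + (inverse g)\<^sup>2 * (A*g*tau + DC) + (-((g*gd)/g^4)) * CC"
    and Pthr: "Pthr = tau + inverse g * thd"
    and DPc: "DPc = inverse g * (taud + (inverse g * thdd + (-gd/g\<^sup>2) * thd))"
    and DK: "DK = inverse g * kd" and DDK: "DDK = inverse g * (inverse g * kdd + (-gd/g\<^sup>2) * kd)"
    and MEAN: "MEAN = Aa/(g*g) + Ac/(K*K)"
    and GAUSS: "GAUSS = (Aa*Ac - Ab*Ab)/((g*g)*(K*K))"
  shows "MEAN = - Ptwo + (UPS / K + (K * DPc + 2 * DK * Pthr) / K ^ 3 * Pone + (DDK - K * Pthr ^ 2) / K ^ 3 * Ptwo) \<and>
         GAUSS = - (Pthr ^ 2) - Ptwo * (UPS / K + (K * DPc + 2 * DK * Pthr) / K ^ 3 * Pone + (DDK - K * Pthr ^ 2) / K ^ 3 * Ptwo)"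
proof -
  define ig where "ig = inverse g"
  define ik where "ik = inverse K"
  have gi: "g * ig = 1" using g by (simp add: ig_def)
  have ki: "K * ik = 1" using k by (simp add: ik_def)
  show ?thesis
    unfolding MEAN GAUSS Aa Ab Ac DC CC A Pone Ptwo Pthr DPc DK DDK
    unfolding divide_inverse inverse_mult_distrib power_inverse[symmetric] ig_def[symmetric] ik_def[symmetric]
    apply (intro conjI)
    subgoal using gi ki sc by algebra
    subgoal using gi ki sc by algebra
    done
qed

lemma smooth_Cn:
  assumes sm: "smooth_strip D f" and s: "s \<in> D"
  shows "Cn n UNIV (\<lambda>v. pderivs bs D f (s, v))"
proof (induction n arbitrary: bs)
  case 0 then show ?case by simp
next
  case (Suc n)
  have "D1 (\<lambda>v. pderivs bs D f (s, v)) = (\<lambda>v. pderivs (False # bs) D f (s, v))"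
    by (simp add: Du_D1 fun_eq_iff)
  then show ?case using Suc[of "False # bs"] sm s by (simp add: smooth_strip_def)
qed

lemma smooth_dt:
  assumes sm: "smooth_strip D f" and s: "s \<in> D"
  shows "((\<lambda>s. pderivs bs D f (s, v)) has_vector_derivative pderivs (True # bs) D f (s, v)) (at s within D)"
  using sm s unfolding smooth_strip_def by (simp add: Dt_def vector_derivative_works[symmetric])

lemma smooth_du:
  assumes sm: "smooth_strip D f" and s: "s \<in> D"
  shows "((\<lambda>v. pderivs bs D f (s, v)) has_vector_derivative pderivs (False # bs) D f (s, v)) (at v)"
  using sm s unfolding smooth_strip_def by (simp add: Du_def vector_derivative_works[symmetric])

lemma smooth_cont: "smooth_strip D f \<Longrightarrow> continuous_on (D \<times> UNIV) (pderivs bs D f)"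
  by (simp add: smooth_strip_def)

lemma C12_Cn:
  assumes "C12_strip D \<theta>" "s \<in> D"
  shows "Cn 2 UNIV (\<lambda>v. \<theta> (s, v))"
proof -
  have "D1 (\<lambda>v. \<theta> (s, v)) = (\<lambda>v. Du \<theta> (s, v))" by (simp add: Du_D1 fun_eq_iff)
  then show ?thesis using assms by (simp add: numeral_2_eq_2 C12_strip_def)
qed

lemma deriv_const_zero:
  assumes "(f has_vector_derivative f') (at t within D)" "\<And>s. s \<in> D \<Longrightarrow> f s = c" "t \<in> D"
    "at t within D \<noteq> bot"
  shows "f' = 0"
proof -
  have "((\<lambda>s. c) has_vector_derivative f') (at t within D)"
    by (rule has_vector_derivative_transform_within[OF assms(1), where d=1]) (use assms in auto)
  then show ?thesis using vector_derivative_unique_within[OF assms(4)] by (metis has_vector_derivative_const)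
qed

lemma diff_norm_within:
  fixes X :: "real \<Rightarrow> 'a::real_inner"
  assumes "X differentiable (at t within D)" "X t \<noteq> 0"
  shows "(\<lambda>s. norm (X s)) differentiable (at t within D)"
proof -
  have "(norm \<circ> X) differentiable (at t within D)"
    by (rule differentiable_chain_within[OF assms(1)])
       (use assms(2) differentiable_norm_at differentiable_at_withinI in blast)
  then show ?thesis by (simp add: o_def)
qed

lemma diff_bb_within:
  fixes X :: "real \<Rightarrow> 'a::real_normed_vector" and Y :: "real \<Rightarrow> 'b::real_normed_vector"
  assumes "bounded_bilinear bb" "X differentiable (at t within D)" "Y differentiable (at t within D)"
  shows "(\<lambda>s. bb (X s) (Y s)) differentiable (at t within D)"
  using bounded_bilinear.has_vector_derivative[OF assms(1), of X _ t D Y] assms(2,3)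
  by (metis differentiableI_vector vector_derivative_works)

context spatial begin
lemma V_alt: "V v = cos (th v) *\<^sub>R W v + sin (th v) *\<^sub>R cross3 (T v) (W v)"
proof -
  have "V v = cos (th v) *\<^sub>R (k v *\<^sub>R N v) + sin (th v) *\<^sub>R (k v *\<^sub>R B v)"
    by (simp add: theta_normal_def scaleR_add_right mult.commute)
  then show ?thesis by (simp only: kN kB)
qed
lemma W_XY: "W v = (inverse (norm (x1 v)))\<^sup>2 *\<^sub>R x2 v + (- ((x1 v \<bullet> x2 v) / (norm (x1 v))^4)) *\<^sub>R x1 v"
  using W_formula[of v] by (simp add: g_eq)
lemma T_X: "T v = inverse (norm (x1 v)) *\<^sub>R x1 v"
  by (simp add: T_eq g_eq)
end

theorem mainTheorem1:
  fixes tb :: ereal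
    and \<gamma> :: "real \<times> real \<Rightarrow> real^3"
    and \<theta> \<upsilon> :: "real \<times> real \<Rightarrow> real"
    and t u :: real
  assumes smooth: "smooth_strip (time_dom tb) \<gamma>"
    and regular: "\<forall>t'\<in>time_dom tb. \<forall>u'. Du \<gamma> (t', u') \<noteq> 0"
    and periodic: "\<forall>t'\<in>time_dom tb. \<forall>u'. \<gamma> (t', u' + 2 * pi) = \<gamma> (t', u')"
    and theta_reg: "C12_strip (time_dom tb) \<theta>"
    and theta_circle: "\<forall>t'\<in>time_dom tb. \<forall>u'. \<exists>k::int. \<theta> (t', u' + 2 * pi) = \<theta> (t', u') + 2 * pi * of_int k"
    and upsilon_C1: "C1_strip (time_dom tb) \<upsilon>"
    and flow: "framed_curvature_flow tb \<gamma> \<theta> \<upsilon>"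
    and t_in: "t \<in> time_dom tb"
    and kpos: "curvature \<gamma> (t, u) > 0"
  shows "(let \<kappa> = curvature \<gamma>; p1 = psi1 \<gamma> \<theta>; p2 = psi2 \<gamma> \<theta>; p3 = psi3 \<gamma> \<theta>;
             p = (t, u);
             chi = \<upsilon> p / \<kappa> p
                 + (\<kappa> p * Ds \<gamma> p3 p + 2 * Ds \<gamma> \<kappa> p * p3 p) / \<kappa> p ^ 3 * p1 p
                 + (Ds \<gamma> (Ds \<gamma> \<kappa>) p - \<kappa> p * p3 p ^ 2) / \<kappa> p ^ 3 * p2 p
         in mean_curv (time_dom tb) \<gamma> \<theta> p = - (p2 p) + chi \<and>
            gauss_curv (time_dom tb) \<gamma> \<theta> p = - (p3 p ^ 2) - p2 p * chi)"
proof -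
  define D where "D = time_dom tb"
  have sm: "smooth_strip D \<gamma>" using smooth D_def by simp
  have tD: "t \<in> D" using t_in D_def by simp
  have nbot: "at t within D \<noteq> bot" using D_nbot t_in D_def by simp
  have spat: "spatial \<gamma> \<theta> s" if s: "s \<in> D" for s
  proof
    show "Cn n UNIV (\<lambda>v. \<gamma> (s, v))" for n using smooth_Cn[OF sm s, of n "[]"] by simp
    show "Du \<gamma> (s, v) \<noteq> 0" for v using regular s D_def by auto
    show "Cn 2 UNIV (\<lambda>v. \<theta> (s, v))" using C12_Cn theta_reg s D_def by auto
  qed
  interpret S: spatial \<gamma> \<theta> t by (rule spat[OF tD])
  have uU: "u \<in> S.U" using kpos by (auto simp: S.U_def S.k_eq)
  have fl1: "Dt D \<gamma> (s, v) = curvature \<gamma> (s, v) *\<^sub>R theta_normal \<gamma> \<theta> (s, v)" if "s \<in> D" for s v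
    using flow that D_def by (auto simp: framed_curvature_flow_def)
  have fl2: "Dt D \<theta> (s, v) = \<upsilon> (s, v)" if "s \<in> D" for s v
    using flow that D_def by (auto simp: framed_curvature_flow_def)
  have schw: "Dt D (Du (pderivs bs D \<gamma>)) (s, v) = Du (Dt D (pderivs bs D \<gamma>)) (s, v)" if s: "s \<in> D" for bs s v
  proof (rule schwarz[OF D_def])
    show "continuous_on (D \<times> UNIV) (Du (Dt D (pderivs bs D \<gamma>)))"
      using smooth_cont[OF sm, of "False # True # bs"] by simp
    show "((\<lambda>s. pderivs bs D \<gamma> (s, v)) has_vector_derivative Dt D (pderivs bs D \<gamma>) (s, v)) (at s within D)"
      if "s \<in> D" for s v using smooth_dt[OF sm that, of bs v] by simp
    show "((\<lambda>v. pderivs bs D \<gamma> (s, v)) has_vector_derivative Du (pderivs bs D \<gamma>) (s, v)) (at v)"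
      if "s \<in> D" for s v using smooth_du[OF sm that, of bs v] by simp
    show "((\<lambda>v. Dt D (pderivs bs D \<gamma>) (s, v)) has_vector_derivative Du (Dt D (pderivs bs D \<gamma>)) (s, v)) (at v)"
      if "s \<in> D" for s v using smooth_du[OF sm that, of "True # bs" v] by simp
  qed (rule s)
  have Vfun: "(\<lambda>w. Dt D \<gamma> (t, w)) = S.V" using fl1[OF tD] by (simp add: fun_eq_iff)
  have DuDt: "Du (Dt D \<gamma>) (t, w) = D1 S.V w" for w
    by (simp add: Du_D1 Vfun)
  have Xd: "Dt D (Du \<gamma>) (t, u) = D1 S.V u" using schw[OF tD, of "[]" u] DuDt by simp
  have Yd: "Dt D (Du (Du \<gamma>)) (t, u) = D1 (D1 S.V) u"
  proof -
    have "Dt D (Du (Du \<gamma>)) (t, u) = Du (Dt D (Du \<gamma>)) (t, u)" using schw[OF tD, of "[False]" u] by simp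
    also have "\<dots> = D1 (\<lambda>w. Dt D (Du \<gamma>) (t, w)) u" by (simp add: Du_D1)
    also have "(\<lambda>w. Dt D (Du \<gamma>) (t, w)) = D1 S.V" using schw[OF tD, of "[]"] DuDt by (simp add: fun_eq_iff)
    finally show ?thesis .
  qed
  define X where "X s = Du \<gamma> (s, u)" for s
  define Y where "Y s = Du (Du \<gamma>) (s, u)" for s
  define G where "G s = norm (X s)" for s
  define Af where "Af s = (inverse (G s))\<^sup>2" for s
  define Cf where "Cf s = - ((X s \<bullet> Y s) / (G s)^4)" for s
  define Tf where "Tf s = inverse (G s) *\<^sub>R X s" for s
  define Wf where "Wf s = Af s *\<^sub>R Y s + Cf s *\<^sub>R X s" for s
  define Pf where "Pf s = cross3 (Tf s) (Wf s)" for s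
  define ths where "ths s = \<theta> (s, u)" for s
  define Vf where "Vf s = cos (ths s) *\<^sub>R Wf s + sin (ths s) *\<^sub>R Pf s" for s
  have XD1: "X s = D1 (\<lambda>v. \<gamma> (s, v)) u" for s by (simp add: X_def Du_D1)
  have YD1: "Y s = D1 (D1 (\<lambda>v. \<gamma> (s, v))) u" for s by (simp add: Y_def Du_D1)
  have hX: "(X has_vector_derivative D1 S.V u) (at t within D)"
    using smooth_dt[OF sm tD, of "[False]" u] Xd unfolding X_def by simp
  have hY: "(Y has_vector_derivative D1 (D1 S.V) u) (at t within D)"
    using smooth_dt[OF sm tD, of "[False, False]" u] Yd unfolding Y_def by simp
  have Xnz: "X t \<noteq> 0" using S.x1nz[of u] by (simp add: XD1)
  have dXw: "X differentiable (at t within D)" using hX by (rule differentiableI_vector)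
  have dYw: "Y differentiable (at t within D)" using hY by (rule differentiableI_vector)
  have dGw: "G differentiable (at t within D)" unfolding G_def[abs_def] by (rule diff_norm_within[OF dXw Xnz])
  have Gnz: "G t \<noteq> 0" using Xnz by (simp add: G_def)
  have dAf: "Af differentiable (at t within D)" unfolding Af_def[abs_def]
    by (intro differentiable_power differentiable_inverse dGw Gnz)
  have dCf: "Cf differentiable (at t within D)" unfolding Cf_def[abs_def]
    by (intro differentiable_minus differentiable_divide diff_bb_within[OF bounded_bilinear_inner] dXw dYw
        differentiable_power dGw) (simp add: Gnz)
  have dTf: "Tf differentiable (at t within D)" unfolding Tf_def[abs_def]
    by (intro differentiable_scaleR differentiable_inverse dGw Gnz dXw)
  obtain Af' where hAf: "(Af has_field_derivative Af') (at t within D)"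
    using dAf by (metis vector_derivative_works has_real_derivative_iff_has_vector_derivative)
  obtain Cf' where hCf: "(Cf has_field_derivative Cf') (at t within D)"
    using dCf by (metis vector_derivative_works has_real_derivative_iff_has_vector_derivative)
  obtain Tf' where hTf: "(Tf has_vector_derivative Tf') (at t within D)"
    using dTf by (metis vector_derivative_works)
  define Wf' where "Wf' = (Af t *\<^sub>R D1 (D1 S.V) u + Af' *\<^sub>R Y t) + (Cf t *\<^sub>R D1 S.V u + Cf' *\<^sub>R X t)"
  have hWf: "(Wf has_vector_derivative Wf') (at t within D)"
    unfolding Wf_def[abs_def] Wf'_def
    by (intro has_vector_derivative_add has_vector_derivative_scaleR hAf hCf hX hY)
  define Pf' where "Pf' = cross3 (Tf t) Wf' + cross3 Tf' (Wf t)"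
  have hPf: "(Pf has_vector_derivative Pf') (at t within D)"
    unfolding Pf_def[abs_def] Pf'_def
    by (rule bounded_bilinear.has_vector_derivative[OF bounded_bilinear_cross3 hTf hWf])
  have hth: "(ths has_field_derivative \<upsilon> (t, u)) (at t within D)"
  proof -
    have "ths differentiable (at t within D)" using theta_reg tD D_def
      by (simp add: C12_strip_def ths_def[abs_def])
    then have "(ths has_vector_derivative Dt D \<theta> (t, u)) (at t within D)"
      by (simp add: Dt_def ths_def[abs_def] vector_derivative_works[symmetric])
    then show ?thesis using fl2[OF tD] by (simp add: has_real_derivative_iff_has_vector_derivative)
  qed
  define Vf' where "Vf' = (cos (ths t) *\<^sub>R Wf' + (- sin (ths t) * \<upsilon> (t, u)) *\<^sub>R Wf t)
      + (sin (ths t) *\<^sub>R Pf' + (cos (ths t) * \<upsilon> (t, u)) *\<^sub>R Pf t)"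
  have hcos: "((\<lambda>s. cos (ths s)) has_field_derivative (- sin (ths t) * \<upsilon> (t, u))) (at t within D)"
    by (auto intro!: derivative_eq_intros hth)
  have hsin: "((\<lambda>s. sin (ths s)) has_field_derivative (cos (ths t) * \<upsilon> (t, u))) (at t within D)"
    by (auto intro!: derivative_eq_intros hth)
  have hVf: "(Vf has_vector_derivative Vf') (at t within D)"
    unfolding Vf_def[abs_def] Vf'_def
    by (intro has_vector_derivative_add has_vector_derivative_scaleR hcos hsin hWf hPf)
  have onD: "Dt D \<gamma> (s, u) = Vf s \<and> Pf s \<bullet> Wf s = 0 \<and> Pf s \<bullet> Pf s - Wf s \<bullet> Wf s = 0
       \<and> Wf s = Ds \<gamma> (tangent \<gamma>) (s, u) \<and> Tf s = tangent \<gamma> (s, u)" if s: "s \<in> D" for s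
  proof -
    interpret Ss: spatial \<gamma> \<theta> s by (rule spat[OF s])
    have W: "Wf s = Ds \<gamma> (tangent \<gamma>) (s, u)"
      by (simp add: Ss.W_XY Wf_def Af_def Cf_def G_def XD1 YD1)
    have T: "Tf s = tangent \<gamma> (s, u)"
      by (simp add: Ss.T_X Tf_def G_def XD1)
    show ?thesis
      using Ss.V_alt[of u] Ss.PP[of u] Ss.PW[of u] fl1[OF s, of u] W T
      by (simp add: Vf_def Pf_def ths_def)
  qed
  have PW': "Pf t \<bullet> Wf' + Pf' \<bullet> Wf t = 0"
    by (rule deriv_const_zero[where c=0, OF bounded_bilinear.has_vector_derivative[OF bounded_bilinear_inner hPf hWf] _ tD nbot])
       (use onD in blast)
  have PP': "(Pf t \<bullet> Pf' + Pf' \<bullet> Pf t) - (Wf t \<bullet> Wf' + Wf' \<bullet> Wf t) = 0"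
    by (rule deriv_const_zero[where c=0, OF has_vector_derivative_diff[OF
          bounded_bilinear.has_vector_derivative[OF bounded_bilinear_inner hPf hPf]
          bounded_bilinear.has_vector_derivative[OF bounded_bilinear_inner hWf hWf]] _ tD nbot])
       (use onD in blast)
  have DtDt: "Dt D (Dt D \<gamma>) (t, u) = Vf'"
  proof -
    have "((\<lambda>s. Dt D \<gamma> (s, u)) has_vector_derivative Vf') (at t within D)"
      by (rule has_vector_derivative_transform_within[OF hVf, where d=1]) (use onD tD in auto)
    then show ?thesis unfolding Dt_def using vector_derivative_within[OF nbot] by simp
  qed
  have Wt: "Wf t = S.W u" and Tt: "Tf t = S.T u" using onD[OF tD] by auto
  have kk: "S.k u \<noteq> 0" using S.k_nz[OF uU] .
  have Pt: "Pf t = S.k u *\<^sub>R S.B u" by (simp add: Pf_def Wt Tt S.kB)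
  have Wt2: "Wf t = S.k u *\<^sub>R S.N u" by (simp add: Wt S.kN)
  have Xt: "X t = S.x1 u" by (simp add: XD1)
  have Yt: "Y t = S.x2 u" by (simp add: YD1)
  have Gt: "G t = S.g u" by (simp add: G_def Xt S.g_eq)
  have tht: "ths t = S.th u" by (simp add: ths_def)
  define \<beta> where "\<beta> = theta_binormal \<gamma> \<theta> (t, u)"
  have kbeta: "S.k u *\<^sub>R \<beta> = (- sin (ths t)) *\<^sub>R Wf t + cos (ths t) *\<^sub>R Pf t"
    by (simp add: \<beta>_def S.beta_eq Wt2 Pt tht algebra_simps)
  have oo: "S.B u \<bullet> S.x1 u = 0" "S.B u \<bullet> S.x2 u = 0"
    using S.ortho[OF uU] by (simp_all add: S.x1_eq S.x2_U[OF uU] inner_add_right)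
  have e2: "Wf t \<bullet> Pf t = 0" "Pf t \<bullet> Wf t = 0" using S.ortho[OF uU] by (simp_all add: Wt2 Pt)
  have e4: "Wf t \<bullet> Wf t = S.k u * S.k u" "Pf t \<bullet> Pf t = S.k u * S.k u"
    using S.ortho[OF uU] by (simp_all add: Wt2 Pt)
  have e6: "Pf' \<bullet> Wf t = - (Pf t \<bullet> Wf')" using PW' by simp
  have e7: "Pf' \<bullet> Pf t = Wf' \<bullet> Wf t" using PP' by (simp add: inner_commute)
  have e1: "Wf' \<bullet> Pf t = Pf t \<bullet> Wf'" by (simp add: inner_commute)
  have main1: "Vf' \<bullet> ((- sin (ths t)) *\<^sub>R Wf t + cos (ths t) *\<^sub>R Pf t)
      = S.k u * S.k u * \<upsilon> (t, u) + Pf t \<bullet> Wf'"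
    unfolding Vf'_def
    apply (simp add: inner_add_left inner_add_right e1 e2 e4 e6 e7 algebra_simps)
    using sin_cos_squared_add[of "ths t"] by algebra
  have main2: "Pf t \<bullet> Wf' = S.k u * (Af t * (S.a u * S.g u * S.tau u + D1 S.c u) + Cf t * S.c u)"
  proof -
    have d2: "S.B u \<bullet> D1 (D1 S.V) u = S.a u * S.g u * S.tau u + D1 S.c u"
      using S.d2V_B[OF uU] by (simp only: inner_commute)
    have "Pf t \<bullet> Wf' = S.k u * (S.B u \<bullet> Wf')" by (simp add: Pt)
    also have "S.B u \<bullet> Wf' = Af t * (S.B u \<bullet> D1 (D1 S.V) u) + Cf t * (S.B u \<bullet> D1 S.V u)"
      unfolding Wf'_def Xt Yt by (simp only: inner_add_right inner_scaleR_right oo mult_zero_right add_0_right)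
    finally show ?thesis by (simp only: d2 S.B_dV[OF uU])
  qed
  have A22: "Dt D (Dt D \<gamma>) (t, u) \<bullet> \<beta> = S.k u * \<upsilon> (t, u)
      + (inverse (S.g u))\<^sup>2 * (S.a u * S.g u * S.tau u + D1 S.c u) + (- ((S.g u * D1 S.g u) / (S.g u)^4)) * S.c u"
  proof -
    have "S.k u * (Vf' \<bullet> \<beta>) = Vf' \<bullet> (S.k u *\<^sub>R \<beta>)" by simp
    also have "\<dots> = S.k u * (S.k u * \<upsilon> (t, u) + (Af t * (S.a u * S.g u * S.tau u + D1 S.c u) + Cf t * S.c u))"
      unfolding kbeta main1 main2 by (simp add: algebra_simps)
    finally have "Vf' \<bullet> \<beta> = S.k u * \<upsilon> (t, u) + (Af t * (S.a u * S.g u * S.tau u + D1 S.c u) + Cf t * S.c u)"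
      using kk by simp
    then show ?thesis
      by (simp add: DtDt Af_def Cf_def Gt Xt Yt S.x1x2[OF uU])
  qed
  have gnz: "S.g u * S.g u \<noteq> 0" using S.g_nz[of u] by simp
  have knz: "S.k u * S.k u \<noteq> 0" using kk by simp
  have F1: "fund1 D \<gamma> (t, u) = vector [vector [S.g u * S.g u, 0], vector [0, S.k u * S.k u]]"
  proof -
    have e1: "Du \<gamma> (t, u) = S.x1 u" by (simp add: Du_D1)
    have e2: "Dt D \<gamma> (t, u) = S.V u" by (rule fl1[OF tD])
    have e3: "S.V u \<bullet> S.x1 u = 0" using S.x1V[of u] by (simp only: inner_commute)
    show ?thesis unfolding fund1_def Let_def e1 e2
      by (simp only: S.x1x1 S.x1V e3 S.VV[OF uU])
  qed
  have F2: "fund2 D \<gamma> \<theta> (t, u) = vector [vector [S.x2 u \<bullet> \<beta>, D1 S.V u \<bullet> \<beta>],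
      vector [D1 S.V u \<bullet> \<beta>, Dt D (Dt D \<gamma>) (t, u) \<bullet> \<beta>]]"
    by (simp add: fund2_def Let_def \<beta>_def Xd DuDt Du_D1 Vfun)
  have MEAN: "mean_curv D \<gamma> \<theta> (t, u) = (S.x2 u \<bullet> \<beta>) / (S.g u * S.g u) + (Dt D (Dt D \<gamma>) (t, u) \<bullet> \<beta>) / (S.k u * S.k u)"
    unfolding mean_curv_def F1 F2 by (rule two_by_two(1)[OF gnz knz])
  have GAUSS: "gauss_curv D \<gamma> \<theta> (t, u) = ((S.x2 u \<bullet> \<beta>) * (Dt D (Dt D \<gamma>) (t, u) \<bullet> \<beta>) - (D1 S.V u \<bullet> \<beta>) * (D1 S.V u \<bullet> \<beta>))
      / ((S.g u * S.g u) * (S.k u * S.k u))"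
    unfolding gauss_curv_def F1 F2 by (rule two_by_two(2)[OF gnz knz])
  show ?thesis
    unfolding Let_def D_def[symmetric]
  proof (rule final_alg2[where g = "S.g u" and gd = "D1 S.g u" and kd = "D1 S.k u" and kdd = "D1 (D1 S.k) u"
        and tau = "S.tau u" and taud = "D1 S.tau u" and thd = "D1 S.th u" and thdd = "D1 (D1 S.th) u"
        and s = "sin (S.th u)" and c = "cos (S.th u)" and A = "S.a u" and CC = "S.c u" and DC = "D1 S.c u"
        and Aa = "S.x2 u \<bullet> \<beta>" and Ab = "D1 S.V u \<bullet> \<beta>" and Ac = "Dt D (Dt D \<gamma>) (t, u) \<bullet> \<beta>"])
    show "S.g u \<noteq> 0" by (rule S.g_nz)
    show "curvature \<gamma> (t, u) \<noteq> 0" using kk .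
    show "(sin (S.th u))\<^sup>2 + (cos (S.th u))\<^sup>2 = 1" by simp
    show "psi1 \<gamma> \<theta> (t, u) = curvature \<gamma> (t, u) * cos (S.th u)" by (simp add: psi1_def)
    show "psi2 \<gamma> \<theta> (t, u) = curvature \<gamma> (t, u) * sin (S.th u)" by (simp add: psi2_def)
    show "S.a u = D1 S.k u * cos (S.th u) - curvature \<gamma> (t, u) * sin (S.th u) * D1 S.th u
        - psi2 \<gamma> \<theta> (t, u) * S.g u * S.tau u"
      by (simp add: S.dp1[OF uU])
    show "S.c u = psi1 \<gamma> \<theta> (t, u) * S.g u * S.tau u + (D1 S.k u * sin (S.th u) + curvature \<gamma> (t, u) * cos (S.th u) * D1 S.th u)"
      by (simp add: S.dp2[OF uU])
    show "D1 S.c u = (D1 S.k u * cos (S.th u) - curvature \<gamma> (t, u) * sin (S.th u) * D1 S.th u) * S.g u * S.tau u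
        + psi1 \<gamma> \<theta> (t, u) * D1 S.g u * S.tau u + psi1 \<gamma> \<theta> (t, u) * S.g u * D1 S.tau u
        + (D1 (D1 S.k) u * sin (S.th u) + 2 * D1 S.k u * cos (S.th u) * D1 S.th u
           - curvature \<gamma> (t, u) * sin (S.th u) * (D1 S.th u)\<^sup>2 + curvature \<gamma> (t, u) * cos (S.th u) * D1 (D1 S.th) u)"
      by (simp add: S.dc[OF uU] S.dp1[OF uU] S.ddp2[OF uU])
    show "S.x2 u \<bullet> \<beta> = - (S.g u * S.g u * curvature \<gamma> (t, u) * sin (S.th u))"
      by (simp add: \<beta>_def S.x2_beta[OF uU])
    show "D1 S.V u \<bullet> \<beta> = - sin (S.th u) * S.a u + cos (S.th u) * S.c u"
      by (simp add: \<beta>_def S.V_beta[OF uU])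
    show "Dt D (Dt D \<gamma>) (t, u) \<bullet> \<beta> = curvature \<gamma> (t, u) * \<upsilon> (t, u)
        + (inverse (S.g u))\<^sup>2 * (S.a u * S.g u * S.tau u + D1 S.c u) + (- ((S.g u * D1 S.g u) / (S.g u)^4)) * S.c u"
      by (rule A22)
    show "psi3 \<gamma> \<theta> (t, u) = S.tau u + inverse (S.g u) * D1 S.th u" by (rule S.p3_val)
    show "Ds \<gamma> (psi3 \<gamma> \<theta>) (t, u) = inverse (S.g u) * (D1 S.tau u + (inverse (S.g u) * D1 (D1 S.th) u
        + (- D1 S.g u / (S.g u)\<^sup>2) * D1 S.th u))" by (rule S.Dsp3[OF uU])
    show "Ds \<gamma> (curvature \<gamma>) (t, u) = inverse (S.g u) * D1 S.k u" by (rule S.Dsk)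
    show "Ds \<gamma> (Ds \<gamma> (curvature \<gamma>)) (t, u) = inverse (S.g u) * (inverse (S.g u) * D1 (D1 S.k) u
        + (- D1 S.g u / (S.g u)\<^sup>2) * D1 S.k u)" by (rule S.Dssk[OF uU])
    show "mean_curv D \<gamma> \<theta> (t, u) = (S.x2 u \<bullet> \<beta>) / (S.g u * S.g u)
        + (Dt D (Dt D \<gamma>) (t, u) \<bullet> \<beta>) / (curvature \<gamma> (t, u) * curvature \<gamma> (t, u))" by (rule MEAN)
    show "gauss_curv D \<gamma> \<theta> (t, u) = ((S.x2 u \<bullet> \<beta>) * (Dt D (Dt D \<gamma>) (t, u) \<bullet> \<beta>) - (D1 S.V u \<bullet> \<beta>) * (D1 S.V u \<bullet> \<beta>))
      / ((S.g u * S.g u) * (curvature \<gamma> (t, u) * curvature \<gamma> (t, u)))" by (rule GAUSS)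
  qed
qed

end
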